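(* Let $\phi$ be an N-function satisfying the structural assumption below, let $\Omega\subset\mathbb{R}^m$ be bounded open, $t_0>0$, $Q:=[-t_0,0)\times\Omega$, and let $w\in L^\phi(-t_0,0;W^{1,\phi}_0(\Omega))$ and $G\in L^{\phi^*}(Q)$ satisfy $\partial_t w=\operatorname{div}G$ on $Q$ and $w(-t_0,\cdot)=0$. Define $\gamma>0$ by $$\phi(\gamma):=\frac1{|Q|}\int_Q\phi(|\nabla w|)\,dz+\frac1{|Q|}\int_Q\phi^*(|G|)\,dz.$$ Then for every $m_0\in\mathbb{N}$ there exists $\lambda\in[\gamma,2^{m_0}\gamma]$ such that, with $\alpha=\alpha(\lambda):=\lambda/\phi'(\lambda)$, $$|\{\mathcal{M}^\alpha(\nabla w\,\chi_Q)>\lambda\}|+|\{\mathcal{M}^\alpha(G\chi_Q)>\phi'(\lambda)\}|\le c\,\frac{\phi(\gamma)}{m_0\,\phi(\lambda)}|Q|,$$ with $c$ independent of $m_0$ and $\gamma$.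
   Context: N-function: convex $\phi:[0,\infty)\to[0,\infty)$, $\phi(0)=0$, with right-continuous nondecreasing derivative $\phi'$, $\phi'(0)=0$, $\phi'>0$ on $(0,\infty)$, $\phi'(t)\to\infty$. Structural assumption: $\phi\in C^1([0,\infty))\cap C^2((0,\infty))$ and $\phi'(t)\sim t\phi''(t)$ uniformly in $t>0$. $\phi^*(t)=\sup_{s\ge0}(st-\phi(s))$. An $\alpha$-parabolic cylinder of radius $r$ is $(t_1-\alpha r^2,t_1+\alpha r^2)\times B_r(x_1)$; for $g\in L^1_{loc}(\mathbb{R}^{m+1})$, $(\mathcal{M}^\alpha g)(z):=\sup\{\frac1{|Q'|}\int_{Q'}|g|:Q'\ \alpha\text{-parabolic cylinder},\ z\in Q'\}$; $\chi_Q$ is the indicator of $Q$ and $\nabla w\chi_Q$, $G\chi_Q$ are regarded as functions on $\mathbb{R}^{m+1}$. *)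

theory Defs
  imports "HOL-Analysis.Analysis"
begin

definition Nder :: "(real \<Rightarrow> real) \<Rightarrow> real \<Rightarrow> real" where
  "Nder \<phi> t = (THE d. (\<phi> has_real_derivative d) (at t within {t..}))"

definition N_function :: "(real \<Rightarrow> real) \<Rightarrow> bool" where
  "N_function \<phi> \<longleftrightarrow>
     convex_on {0..} \<phi> \<and> \<phi> 0 = 0 \<and> (\<forall>t\<ge>0. 0 \<le> \<phi> t) \<and>
     (\<forall>t\<ge>0. \<exists>d. (\<phi> has_real_derivative d) (at t within {t..})) \<and>
     mono_on {0..} (Nder \<phi>) \<and>
     (\<forall>t\<ge>0. continuous (at t within {t..}) (Nder \<phi>)) \<and>
     Nder \<phi> 0 = 0 \<and> (\<forall>t>0. 0 < Nder \<phi> t) \<and>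
     filterlim (Nder \<phi>) at_top at_top"

text \<open>Structural assumption: phi in C^1([0,oo)) and C^2((0,oo)), phi'(t) ~ t phi''(t).\<close>
definition structural :: "(real \<Rightarrow> real) \<Rightarrow> bool" where
  "structural \<phi> \<longleftrightarrow>
     continuous_on {0..} (Nder \<phi>) \<and>
     (\<forall>t>0. \<phi> differentiable (at t)) \<and>
     (\<forall>t>0. Nder \<phi> differentiable (at t)) \<and>
     continuous_on {0<..} (deriv (Nder \<phi>)) \<and>
     (\<exists>c1 c2. 0 < c1 \<and> 0 < c2 \<and>
        (\<forall>t>0. c1 * Nder \<phi> t \<le> t * deriv (Nder \<phi>) t \<and>
               t * deriv (Nder \<phi>) t \<le> c2 * Nder \<phi> t))"

definition conj_fn :: "(real \<Rightarrow> real) \<Rightarrow> real \<Rightarrow> real" where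
  "conj_fn \<phi> t = Sup {s * t - \<phi> s | s. 0 \<le> s}"

definition orlicz :: "(real \<Rightarrow> real) \<Rightarrow> 'a::euclidean_space set \<Rightarrow> ('a \<Rightarrow> 'b::real_normed_vector) \<Rightarrow> bool" where
  "orlicz \<phi> S f \<longleftrightarrow> set_borel_measurable lebesgue S f \<and>
     (\<exists>k>0. (\<integral>\<^sup>+x\<in>S. ennreal (\<phi> (norm (f x) / k)) \<partial>lebesgue) < \<infinity>)"

text \<open>Luxemburg norm of f_k on S tends to 0.\<close>
definition lux_tendsto_zero :: "(real \<Rightarrow> real) \<Rightarrow> 'a::euclidean_space set \<Rightarrow> (nat \<Rightarrow> 'a \<Rightarrow> 'b::real_normed_vector) \<Rightarrow> bool" where
  "lux_tendsto_zero \<phi> S f \<longleftrightarrow>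
     (\<forall>\<epsilon>>0. \<forall>\<^sub>F k in sequentially. (\<integral>\<^sup>+x\<in>S. ennreal (\<phi> (norm (f k x) / \<epsilon>)) \<partial>lebesgue) \<le> 1)"

fun Ck :: "nat \<Rightarrow> ('a::euclidean_space \<Rightarrow> real) \<Rightarrow> bool" where
  "Ck 0 f = continuous_on UNIV f"
| "Ck (Suc k) f = ((\<forall>x. f differentiable (at x)) \<and>
      (\<forall>i\<in>Basis. Ck k (\<lambda>x. frechet_derivative f (at x) i)))"

definition smooth :: "('a::euclidean_space \<Rightarrow> real) \<Rightarrow> bool" where
  "smooth f \<longleftrightarrow> (\<forall>k. Ck k f)"

definition test_fn :: "'a::euclidean_space set \<Rightarrow> ('a \<Rightarrow> real) \<Rightarrow> bool" where
  "test_fn S \<psi> \<longleftrightarrow> smooth \<psi> \<and> compact (closure {x. \<psi> x \<noteq> 0}) \<and> closure {x. \<psi> x \<noteq> 0} \<subseteq> S"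

definition grad :: "('a::euclidean_space \<Rightarrow> real) \<Rightarrow> 'a \<Rightarrow> 'a" where
  "grad \<psi> x = (\<Sum>i\<in>Basis. frechet_derivative \<psi> (at x) i *\<^sub>R i)"

definition weak_grad :: "'a::euclidean_space set \<Rightarrow> ('a \<Rightarrow> real) \<Rightarrow> ('a \<Rightarrow> 'a) \<Rightarrow> bool" where
  "weak_grad Om u g \<longleftrightarrow> (\<forall>\<psi>. test_fn Om \<psi> \<longrightarrow> (\<forall>i\<in>Basis.
     (LINT x:Om|lebesgue. u x * frechet_derivative \<psi> (at x) i) =
     - (LINT x:Om|lebesgue. (g x \<bullet> i) * \<psi> x)))"

text \<open>u belongs to W_0^{1,phi}(Om) with weak gradient g: closure of C_c^oo(Om)
  in the (Luxemburg) Orlicz--Sobolev norm.\<close>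
definition W0 :: "(real \<Rightarrow> real) \<Rightarrow> 'a::euclidean_space set \<Rightarrow> ('a \<Rightarrow> real) \<Rightarrow> ('a \<Rightarrow> 'a) \<Rightarrow> bool" where
  "W0 \<phi> Om u g \<longleftrightarrow> orlicz \<phi> Om u \<and> orlicz \<phi> Om g \<and> weak_grad Om u g \<and>
     (\<exists>\<psi>. (\<forall>k. test_fn Om (\<psi> k)) \<and>
        lux_tendsto_zero \<phi> Om (\<lambda>k x. \<psi> k x - u x) \<and>
        lux_tendsto_zero \<phi> Om (\<lambda>k x. grad (\<psi> k) x - g x))"

definition dt :: "(real \<times> 'a::euclidean_space \<Rightarrow> real) \<Rightarrow> real \<times> 'a \<Rightarrow> real" where
  "dt \<eta> z = frechet_derivative \<eta> (at z) (1, 0)"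

definition gradx :: "(real \<times> 'a::euclidean_space \<Rightarrow> real) \<Rightarrow> real \<times> 'a \<Rightarrow> 'a" where
  "gradx \<eta> z = (\<Sum>i\<in>Basis. frechet_derivative \<eta> (at z) (0, i) *\<^sub>R i)"

definition par_cyl :: "real \<Rightarrow> real \<Rightarrow> 'a::euclidean_space \<Rightarrow> real \<Rightarrow> (real \<times> 'a) set" where
  "par_cyl \<alpha> t1 x1 r = {z. \<bar>fst z - t1\<bar> < \<alpha> * r\<^sup>2 \<and> snd z \<in> ball x1 r}"

definition maxfn :: "real \<Rightarrow> (real \<times> 'a::euclidean_space \<Rightarrow> 'b::real_normed_vector) \<Rightarrow> real \<times> 'a \<Rightarrow> ennreal" where
  "maxfn \<alpha> g z = (SUP C \<in> {par_cyl \<alpha> t1 x1 r | t1 x1 r. 0 < r \<and> z \<in> par_cyl \<alpha> t1 x1 r}.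
       (\<integral>\<^sup>+y\<in>C. ennreal (norm (g y)) \<partial>lebesgue) / emeasure lebesgue C)"

end

theory Submission
  imports Defs
begin

lemma cyl_eq: "par_cyl \<alpha> t x r = {t - \<alpha>*r\<^sup>2<..<t+\<alpha>*r\<^sup>2} \<times> ball x r"
  by (auto simp: par_cyl_def abs_less_iff)

lemma open_cyl: "open (par_cyl \<alpha> t x r)"
  unfolding cyl_eq by (intro open_Times) auto

lemma emeasure_lborel_Times:
  fixes A :: "real set" and B :: "'n::euclidean_space set"
  assumes "A \<in> sets lborel" "B \<in> sets lborel"
  shows "emeasure lborel (A \<times> B) = emeasure lborel A * emeasure lborel B"
proof -
  have "emeasure lborel (A \<times> B) = emeasure (lborel \<Otimes>\<^sub>M lborel) (A \<times> B)"
    by (simp add: lborel_prod)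
  also have "\<dots> = emeasure lborel A * emeasure lborel B"
    using assms by (simp add: lborel.emeasure_pair_measure_Times)
  finally show ?thesis .
qed

definition ubv :: "'n::euclidean_space itself \<Rightarrow> real" where
  "ubv _ = measure lebesgue (ball (0::'n) 1)"

lemma ubv_pos: "ubv TYPE('n::euclidean_space) > 0"
  unfolding ubv_def using content_ball_pos[of 1 "0::'n"] by simp

lemma emeasure_ball': 
  fixes x :: "'n::euclidean_space"
  assumes "r \<ge> 0"
  shows "emeasure lborel (ball x r) = ennreal (r ^ DIM('n) * ubv TYPE('n))"
proof -
  have "emeasure lborel (ball x r) = emeasure lebesgue (ball x r)" by simp
  also have "\<dots> = ennreal (r ^ DIM('n)) * emeasure lebesgue (ball (0 :: 'n) 1)"
    using assms by (rule emeasure_lebesgue_ball_conv_unit_ball)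
  also have "emeasure lebesgue (ball (0 :: 'n) 1) = ennreal (ubv TYPE('n))"
    unfolding ubv_def using emeasure_lborel_ball_finite[of "0::'n" 1]
    by (simp add: emeasure_eq_ennreal_measure)
  finally show ?thesis using assms ubv_pos[where 'n='n] by (simp add: ennreal_mult)
qed

lemma emeasure_cyl:
  fixes x :: "'n::euclidean_space"
  assumes "\<alpha> > 0" "r > 0"
  shows "emeasure lebesgue (par_cyl \<alpha> t x r) = ennreal (2*\<alpha>*r\<^sup>2 * (r ^ DIM('n) * ubv TYPE('n)))"
proof -
  have s: "par_cyl \<alpha> t x r \<in> sets lborel" using open_cyl[of \<alpha> t x r] by (simp add: borel_open)
  have "emeasure lebesgue (par_cyl \<alpha> t x r) = emeasure lborel (par_cyl \<alpha> t x r)"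
    using s by simp
  also have "\<dots> = emeasure lborel {t - \<alpha>*r\<^sup>2<..<t+\<alpha>*r\<^sup>2} * emeasure lborel (ball x r)"
    unfolding cyl_eq by (rule emeasure_lborel_Times) auto
  also have "\<dots> = ennreal (2*\<alpha>*r\<^sup>2) * ennreal (r ^ DIM('n) * ubv TYPE('n))"
    using assms by (simp add: emeasure_ball' mult.assoc)
  finally show ?thesis using assms by (simp add: ennreal_mult')
qed


lemma less_div_ennreal_iff:
  assumes "0 < \<mu>" "0 \<le> s"
  shows "(ennreal s < I / ennreal \<mu>) \<longleftrightarrow> (ennreal s * ennreal \<mu> < I)"
proof (cases I)
  case (real i)
  then show ?thesis using assms
    by (simp add: divide_ennreal ennreal_mult'[symmetric] ennreal_less_iff pos_less_divide_eq)
next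
  case top
  then show ?thesis using assms by (simp add: ennreal_top_divide ennreal_mult'[symmetric])
qed

lemma inner_reg_bound:
  fixes E :: "'a::euclidean_space set"
  assumes E: "E \<in> sets lebesgue" and c: "0 < c"
    and K: "\<And>K. compact K \<Longrightarrow> K \<subseteq> E \<Longrightarrow> ennreal c * emeasure lebesgue K \<le> R"
  shows "ennreal c * emeasure lebesgue E \<le> R"
proof -
  define S where "S n = E \<inter> ball 0 (real n)" for n :: nat
  have Ssets: "S n \<in> sets lebesgue" for n using E unfolding S_def by auto
  have Sb: "ennreal c * emeasure lebesgue (S n) \<le> R" for n
  proof (rule ennreal_le_epsilon)
    fix e :: real assume e: "0 < e"
    obtain T where T: "closed T" "T \<subseteq> S n" "S n - T \<in> lmeasurable"
      "emeasure lebesgue (S n - T) < ennreal (e / c)"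
      using sets_lebesgue_inner_closed[OF Ssets, of "e/c"] e c by auto
    have "compact T" using T(1,2) unfolding S_def
      by (meson bounded_ball bounded_subset compact_eq_bounded_closed le_infE)
    moreover have "T \<subseteq> E" using T(2) unfolding S_def by auto
    ultimately have KT: "ennreal c * emeasure lebesgue T \<le> R" by (rule K)
    have Tsets: "T \<in> sets lebesgue" using T(1) by (simp add: borel_closed)
    have "emeasure lebesgue (S n) \<le> emeasure lebesgue T + emeasure lebesgue (S n - T)"
      proof -
      have "S n = T \<union> (S n - T)" using T(2) by auto
      moreover have "S n - T \<in> sets lebesgue" using T(3) by (simp add: fmeasurableD)
      ultimately show ?thesis using emeasure_subadditive[OF Tsets, of "S n - T"] by metis
    qed
    also have "\<dots> \<le> emeasure lebesgue T + ennreal (e / c)"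
      using T(4) by (intro add_left_mono) simp
    finally have "ennreal c * emeasure lebesgue (S n) \<le> ennreal c * emeasure lebesgue T + ennreal c * ennreal (e / c)"
      by (metis distrib_left mult_left_mono zero_le)
    also have "ennreal c * ennreal (e / c) = ennreal e"
      using c e by (simp add: ennreal_mult'[symmetric])
    finally show "ennreal c * emeasure lebesgue (S n) \<le> R + ennreal e"
      using KT by (meson add_right_mono order_trans)
  qed
  have inc: "incseq S" unfolding S_def incseq_def
    by (auto simp: subset_eq)
  have U: "(\<Union>n. S n) = E" unfolding S_def
    by (auto, metis reals_Archimedean2)
  have "emeasure lebesgue E = (SUP n. emeasure lebesgue (S n))"
  proof -
    have "(SUP n. emeasure lebesgue (S n)) = emeasure lebesgue (\<Union>n. S n)"
      by (rule SUP_emeasure_incseq) (use Ssets inc in auto)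
    then show ?thesis using U by simp
  qed
  hence "ennreal c * emeasure lebesgue E = (SUP n. ennreal c * emeasure lebesgue (S n))"
    by (simp add: SUP_mult_left_ennreal)
  also have "\<dots> \<le> R" using Sb by (rule SUP_least)
  finally show ?thesis .
qed


definition cyl :: "real \<Rightarrow> real \<times> 'n::euclidean_space \<times> real \<Rightarrow> (real \<times> 'n) set" where
  "cyl \<alpha> a = par_cyl \<alpha> (fst a) (fst (snd a)) (snd (snd a))"
definition cyl3 :: "real \<Rightarrow> real \<times> 'n::euclidean_space \<times> real \<Rightarrow> (real \<times> 'n) set" where
  "cyl3 \<alpha> a = par_cyl \<alpha> (fst a) (fst (snd a)) (3 * snd (snd a))"

lemma cyl_engulf:
  fixes x x0 :: "'n::euclidean_space"
  assumes "0 < \<alpha>" "0 < r" "r \<le> r0" "par_cyl \<alpha> t x r \<inter> par_cyl \<alpha> t0 x0 r0 \<noteq> {}"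
  shows "par_cyl \<alpha> t x r \<subseteq> par_cyl \<alpha> t0 x0 (3*r0)"
proof
  obtain z where z: "z \<in> par_cyl \<alpha> t x r" "z \<in> par_cyl \<alpha> t0 x0 r0" using assms(4) by blast
  fix y assume y: "y \<in> par_cyl \<alpha> t x r"
  have rr: "r\<^sup>2 \<le> r0\<^sup>2" using assms by (simp add: power_mono)
  have "\<alpha> * r\<^sup>2 \<le> \<alpha> * r0\<^sup>2" using rr assms by simp
  moreover have "\<bar>fst y - t\<bar> < \<alpha> * r\<^sup>2" "\<bar>fst z - t\<bar> < \<alpha> * r\<^sup>2" "\<bar>fst z - t0\<bar> < \<alpha> * r0\<^sup>2"
    using y z by (auto simp: par_cyl_def)
  moreover have "\<alpha> * (3*r0)\<^sup>2 = 9 * (\<alpha> * r0\<^sup>2)" by (simp add: power2_eq_square)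
  moreover have "0 \<le> \<alpha> * r0\<^sup>2" using assms by simp
  ultimately have "\<bar>fst y - t0\<bar> < \<alpha> * (3*r0)\<^sup>2" by linarith
  moreover have "dist x (snd y) < r" "dist x (snd z) < r" "dist x0 (snd z) < r0"
    using y z by (auto simp: par_cyl_def)
  then have "dist x0 (snd y) < 3*r0" using assms
    by (smt (verit) dist_commute dist_triangle)
  ultimately show "y \<in> par_cyl \<alpha> t0 x0 (3*r0)" by (simp add: par_cyl_def)
qed

lemma cyl_nonempty: "0 < \<alpha> \<Longrightarrow> 0 < snd (snd a) \<Longrightarrow> (fst a, fst (snd a)) \<in> cyl \<alpha> a"
  by (simp add: cyl_def par_cyl_def)

lemma vitali_fin:
  fixes F :: "(real \<times> 'n::euclidean_space \<times> real) set"
  assumes "finite F" "\<forall>a\<in>F. 0 < snd (snd a)" "0 < \<alpha>"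
  shows "\<exists>S\<subseteq>F. disjoint_family_on (cyl \<alpha>) S \<and> (\<Union>a\<in>F. cyl \<alpha> a) \<subseteq> (\<Union>a\<in>S. cyl3 \<alpha> a)"
  using assms(1,2)
proof (induction "card F" arbitrary: F rule: less_induct)
  case less
  show ?case
  proof (cases "F = {}")
    case True then show ?thesis by (auto simp: disjoint_family_on_def)
  next
    case False
    define m where "m = Max ((\<lambda>a. snd (snd a)) ` F)"
    have "m \<in> (\<lambda>a. snd (snd a)) ` F" unfolding m_def using less.prems False by (intro Max_in) auto
    then obtain a0 where a0: "a0 \<in> F" "snd (snd a0) = m" by auto
    have amax: "snd (snd a) \<le> m" if "a \<in> F" for a unfolding m_def using less.prems that by auto
    define F' where "F' = {a\<in>F. cyl \<alpha> a \<inter> cyl \<alpha> a0 = {}}"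
    have "a0 \<notin> F'" using cyl_nonempty[OF assms(3), of a0] a0 less.prems unfolding F'_def by auto
    hence "F' \<subset> F" using a0 unfolding F'_def by auto
    hence "card F' < card F" using less.prems by (simp add: psubset_card_mono)
    moreover have "finite F'" "\<forall>a\<in>F'. 0 < snd (snd a)" using less.prems unfolding F'_def by auto
    ultimately obtain S' where S': "S' \<subseteq> F'" "disjoint_family_on (cyl \<alpha>) S'"
      "(\<Union>a\<in>F'. cyl \<alpha> a) \<subseteq> (\<Union>a\<in>S'. cyl3 \<alpha> a)"
      using less.hyps by blast
    show ?thesis
    proof (intro exI conjI)
      show "insert a0 S' \<subseteq> F" using S'(1) a0 unfolding F'_def by auto
      show "disjoint_family_on (cyl \<alpha>) (insert a0 S')"
        using S'(1,2) unfolding disjoint_family_on_def F'_def by blast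
      show "(\<Union>a\<in>F. cyl \<alpha> a) \<subseteq> (\<Union>a\<in>insert a0 S'. cyl3 \<alpha> a)"
      proof
        fix y assume "y \<in> (\<Union>a\<in>F. cyl \<alpha> a)"
        then obtain a where a: "a \<in> F" "y \<in> cyl \<alpha> a" by auto
        show "y \<in> (\<Union>a\<in>insert a0 S'. cyl3 \<alpha> a)"
        proof (cases "a \<in> F'")
          case True then show ?thesis using S'(3) a by auto
        next
          case False
          hence "cyl \<alpha> a \<inter> cyl \<alpha> a0 \<noteq> {}" using a unfolding F'_def by auto
          moreover have "snd (snd a) \<le> snd (snd a0)" using amax a a0 by auto
          moreover have "0 < snd (snd a)" using less.prems(2) a by auto
          ultimately have "cyl \<alpha> a \<subseteq> cyl3 \<alpha> a0" unfolding cyl_def cyl3_def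
            using cyl_engulf[OF assms(3)] by blast
          then show ?thesis using a by auto
        qed
      qed
    qed
  qed
qed


lemma cyl_meas:
  assumes "0 < \<alpha>" "0 < snd (snd a)"
  shows "emeasure lebesgue (cyl \<alpha> (a::real \<times> 'n::euclidean_space \<times> real)) =
    ennreal (2*\<alpha>*(snd (snd a))\<^sup>2 * ((snd (snd a)) ^ DIM('n) * ubv TYPE('n)))"
  unfolding cyl_def using assms by (rule emeasure_cyl)

definition Kc :: "'n::euclidean_space itself \<Rightarrow> real" where
  "Kc _ = 9 * 3 ^ DIM('n)"

lemma cyl3_meas:
  assumes "0 < \<alpha>" "0 < snd (snd a)"
  shows "emeasure lebesgue (cyl3 \<alpha> (a::real \<times> 'n::euclidean_space \<times> real)) =
    ennreal (Kc TYPE('n)) * emeasure lebesgue (cyl \<alpha> a)"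
proof -
  define r where "r = snd (snd a)"
  have r: "0 < r" using assms r_def by simp
  have "emeasure lebesgue (cyl3 \<alpha> a) = ennreal (2*\<alpha>*(3*r)\<^sup>2 * ((3*r) ^ DIM('n) * ubv TYPE('n)))"
    unfolding cyl3_def r_def using assms by (intro emeasure_cyl) auto
  also have "2*\<alpha>*(3*r)\<^sup>2 * ((3*r) ^ DIM('n) * ubv TYPE('n)) =
     Kc TYPE('n) * (2*\<alpha>*r\<^sup>2 * (r ^ DIM('n) * ubv TYPE('n)))"
    unfolding Kc_def by (simp add: power_mult_distrib power2_eq_square)
  also have "ennreal (Kc TYPE('n) * (2*\<alpha>*r\<^sup>2 * (r ^ DIM('n) * ubv TYPE('n)))) =
     ennreal (Kc TYPE('n)) * ennreal (2*\<alpha>*r\<^sup>2 * (r ^ DIM('n) * ubv TYPE('n)))"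
    using r assms ubv_pos[where 'n='n] by (intro ennreal_mult) (auto simp: Kc_def)
  finally show ?thesis
    using cyl_meas[OF assms] unfolding r_def by simp
qed

lemma cyl_meas_pos: "0 < \<alpha> \<Longrightarrow> 0 < snd (snd a) \<Longrightarrow>
   \<exists>\<mu>>0. emeasure lebesgue (cyl \<alpha> (a::real \<times> 'n::euclidean_space \<times> real)) = ennreal \<mu>"
proof -
  assume h: "0 < \<alpha>" "0 < snd (snd a)"
  have "0 < 2*\<alpha>*(snd (snd a))\<^sup>2 * ((snd (snd a)) ^ DIM('n) * ubv TYPE('n))"
    using h ubv_pos[where 'n='n] by simp
  then show ?thesis using cyl_meas[OF h] by blast
qed

lemma maxfn_less_iff:
  fixes g :: "real \<times> 'n::euclidean_space \<Rightarrow> 'b::real_normed_vector"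
  assumes "0 < \<alpha>" "0 \<le> s"
  shows "ennreal s < maxfn \<alpha> g z \<longleftrightarrow>
    (\<exists>a. 0 < snd (snd a) \<and> z \<in> cyl \<alpha> a \<and>
       ennreal s * emeasure lebesgue (cyl \<alpha> a) < (\<integral>\<^sup>+y\<in>cyl \<alpha> a. ennreal (norm (g y)) \<partial>lebesgue))"
  (is "_ \<longleftrightarrow> ?R")
proof -
  have "ennreal s < maxfn \<alpha> g z \<longleftrightarrow> (\<exists>a. 0 < snd (snd a) \<and> z \<in> cyl \<alpha> a \<and>
       ennreal s < (\<integral>\<^sup>+y\<in>cyl \<alpha> a. ennreal (norm (g y)) \<partial>lebesgue) / emeasure lebesgue (cyl \<alpha> a))"
    unfolding maxfn_def less_SUP_iff cyl_def by force
  also have "\<dots> \<longleftrightarrow> ?R"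
  proof (intro iff_exI conj_cong refl)
    fix a :: "real \<times> 'n \<times> real" assume "0 < snd (snd a)"
    then obtain \<mu> where "\<mu> > 0" "emeasure lebesgue (cyl \<alpha> a) = ennreal \<mu>"
      using cyl_meas_pos[OF assms(1)] by blast
    then show "(ennreal s < (\<integral>\<^sup>+y\<in>cyl \<alpha> a. ennreal (norm (g y)) \<partial>lebesgue) / emeasure lebesgue (cyl \<alpha> a))
      = (ennreal s * emeasure lebesgue (cyl \<alpha> a) < (\<integral>\<^sup>+y\<in>cyl \<alpha> a. ennreal (norm (g y)) \<partial>lebesgue))"
      using less_div_ennreal_iff assms(2) by simp
  qed
  finally show ?thesis .
qed


lemma cyl_sets: "cyl \<alpha> a \<in> sets lebesgue"
proof -
  have "open (cyl \<alpha> a)" unfolding cyl_def by (rule open_cyl)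
  then show ?thesis by (simp add: borel_open)
qed

lemma cyl3_sets: "cyl3 \<alpha> a \<in> sets lebesgue"
proof -
  have "open (cyl3 \<alpha> a)" unfolding cyl3_def by (rule open_cyl)
  then show ?thesis by (simp add: borel_open)
qed

lemma Kc_pos: "0 < Kc TYPE('n::euclidean_space)" by (simp add: Kc_def)

lemma weak_type:
  fixes h :: "real \<times> 'n::euclidean_space \<Rightarrow> 'b::real_normed_vector"
  assumes hm: "h \<in> borel_measurable lebesgue" and \<alpha>: "0 < \<alpha>" and s: "0 < s"
  shows "ennreal s * emeasure lebesgue {z. ennreal s < maxfn \<alpha> h z} \<le>
     ennreal (2 * Kc TYPE('n)) * (\<integral>\<^sup>+z. ennreal (norm (h z)) * indicator {z. s/2 < norm (h z)} z \<partial>lebesgue)"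
proof -
  define u1 where "u1 z = ennreal (norm (h z)) * indicator {z. s/2 < norm (h z)} z" for z
  have u1m: "u1 \<in> borel_measurable lebesgue" unfolding u1_def using hm by measurable
  define good where "good a \<longleftrightarrow> 0 < snd (snd a) \<and>
     ennreal (s/2) * emeasure lebesgue (cyl \<alpha> a) \<le> (\<integral>\<^sup>+y\<in>cyl \<alpha> a. u1 y \<partial>lebesgue)"
    for a :: "real \<times> 'n \<times> real"
  define E where "E = {z. ennreal s < maxfn \<alpha> h z}"
  have goodI: "good a" if a: "0 < snd (snd a)"
     "ennreal s * emeasure lebesgue (cyl \<alpha> a) < (\<integral>\<^sup>+y\<in>cyl \<alpha> a. ennreal (norm (h y)) \<partial>lebesgue)" for a
  proof -
    obtain \<mu> where mu: "\<mu> > 0" "emeasure lebesgue (cyl \<alpha> a) = ennreal \<mu>"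
      using cyl_meas_pos[OF \<alpha> a(1)] by blast
    have cm: "cyl \<alpha> a \<in> sets lebesgue" by (rule cyl_sets)
    have "(\<integral>\<^sup>+y\<in>cyl \<alpha> a. ennreal (norm (h y)) \<partial>lebesgue) \<le>
       (\<integral>\<^sup>+y. u1 y * indicator (cyl \<alpha> a) y + ennreal (s/2) * indicator (cyl \<alpha> a) y \<partial>lebesgue)"
    proof (rule nn_integral_mono)
      fix y
      show "ennreal (norm (h y)) * indicator (cyl \<alpha> a) y \<le>
            u1 y * indicator (cyl \<alpha> a) y + ennreal (s/2) * indicator (cyl \<alpha> a) y"
        unfolding u1_def by (cases "y \<in> cyl \<alpha> a"; cases "s/2 < norm (h y)") (auto intro!: ennreal_leI)
    qed
    also have "\<dots> = (\<integral>\<^sup>+y\<in>cyl \<alpha> a. u1 y \<partial>lebesgue) + ennreal (s/2) * emeasure lebesgue (cyl \<alpha> a)"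
      using u1m cm by (simp add: nn_integral_add nn_integral_cmult_indicator)
    finally have A: "(\<integral>\<^sup>+y\<in>cyl \<alpha> a. ennreal (norm (h y)) \<partial>lebesgue) \<le>
      (\<integral>\<^sup>+y\<in>cyl \<alpha> a. u1 y \<partial>lebesgue) + ennreal (s/2) * ennreal \<mu>" using mu by simp
    have B: "ennreal s * ennreal \<mu> = ennreal (s/2) * ennreal \<mu> + ennreal (s/2) * ennreal \<mu>"
      using s mu by (simp add: ennreal_mult'[symmetric] ennreal_plus[symmetric] del: ennreal_plus)
    have "ennreal s * ennreal \<mu> < (\<integral>\<^sup>+y\<in>cyl \<alpha> a. ennreal (norm (h y)) \<partial>lebesgue)"
      using a(2) mu(2) by simp
    also note A
    finally have C: "ennreal (s/2) * ennreal \<mu> + ennreal (s/2) * ennreal \<mu> <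
       (\<integral>\<^sup>+y\<in>cyl \<alpha> a. u1 y \<partial>lebesgue) + ennreal (s/2) * ennreal \<mu>"
      by (simp only: B)
    have "ennreal (s/2) * ennreal \<mu> < (\<integral>\<^sup>+y\<in>cyl \<alpha> a. u1 y \<partial>lebesgue)"
    proof -
      have "ennreal (s/2) * ennreal \<mu> + ennreal (s/2) * ennreal \<mu> <
         ennreal (s/2) * ennreal \<mu> + (\<integral>\<^sup>+y\<in>cyl \<alpha> a. u1 y \<partial>lebesgue)"
        using C by (simp only: add.commute)
      moreover have "ennreal (s/2) * ennreal \<mu> \<noteq> \<infinity>"
      proof -
        have "ennreal (s/2) * ennreal \<mu> = ennreal (s/2*\<mu>)"
          by (rule ennreal_mult[symmetric]) (use s mu in auto)
        then show ?thesis by simp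
      qed
      ultimately show ?thesis by (metis ennreal_add_left_cancel_less top.extremum_uniqueI top_greatest)
    qed
    then show ?thesis unfolding good_def using a(1) mu by simp
  qed
  have Eeq: "E = (\<Union>a\<in>{a. 0 < snd (snd a) \<and> ennreal s * emeasure lebesgue (cyl \<alpha> a) < (\<integral>\<^sup>+y\<in>cyl \<alpha> a. ennreal (norm (h y)) \<partial>lebesgue)}. cyl \<alpha> a)"
  proof -
    have "\<And>z. (ennreal s < maxfn \<alpha> h z) = (\<exists>a. 0 < snd (snd a) \<and> z \<in> cyl \<alpha> a \<and>
       ennreal s * emeasure lebesgue (cyl \<alpha> a) < (\<integral>\<^sup>+y\<in>cyl \<alpha> a. ennreal (norm (h y)) \<partial>lebesgue))"
      using maxfn_less_iff[OF \<alpha>, of s h] s by simp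
    then show ?thesis unfolding E_def by blast
  qed
  have Eopen: "open E" unfolding Eeq cyl_def by (intro open_UN ballI open_cyl)
  have Esub: "E \<subseteq> (\<Union>a\<in>{a. good a}. cyl \<alpha> a)" unfolding Eeq using goodI by blast
  have main: "ennreal (s/2) * emeasure lebesgue E \<le> ennreal (Kc TYPE('n)) * (\<integral>\<^sup>+z. u1 z \<partial>lebesgue)"
  proof (rule inner_reg_bound)
    show "E \<in> sets lebesgue" using Eopen by (simp add: borel_open)
    show "0 < s/2" using s by simp
    fix K assume K: "compact K" "K \<subseteq> E"
    have o: "\<And>T. T \<in> {a. good a} \<Longrightarrow> open (cyl \<alpha> T)" unfolding cyl_def by (rule open_cyl)
    have Kcov: "K \<subseteq> (\<Union>a\<in>{a. good a}. cyl \<alpha> a)" using Esub K(2) by (rule order_trans[rotated])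
    obtain F where F: "F \<subseteq> {a. good a}" "finite F" "K \<subseteq> (\<Union>a\<in>F. cyl \<alpha> a)"
      by (rule compactE_image[OF K(1) o Kcov])
    have Fpos: "\<forall>a\<in>F. 0 < snd (snd a)" using F(1) unfolding good_def by auto
    obtain S where S: "S \<subseteq> F" "disjoint_family_on (cyl \<alpha>) S" "(\<Union>a\<in>F. cyl \<alpha> a) \<subseteq> (\<Union>a\<in>S. cyl3 \<alpha> a)"
      using vitali_fin[OF F(2) Fpos \<alpha>] by blast
    have finS: "finite S" using S(1) F(2) finite_subset by blast
    have c3s: "cyl3 \<alpha> a \<in> sets lebesgue" for a :: "real \<times> 'n \<times> real"  by (rule cyl3_sets)
    have cs: "cyl \<alpha> a \<in> sets lebesgue" for a :: "real \<times> 'n \<times> real"  by (rule cyl_sets)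
    have "emeasure lebesgue K \<le> emeasure lebesgue (\<Union>a\<in>S. cyl3 \<alpha> a)"
      using F(3) S(3) finS by (intro emeasure_mono sets.finite_UN) (auto intro: c3s)
    also have "\<dots> \<le> (\<Sum>a\<in>S. emeasure lebesgue (cyl3 \<alpha> a))"
      using finS c3s by (intro emeasure_subadditive_finite) auto
    also have "\<dots> = (\<Sum>a\<in>S. ennreal (Kc TYPE('n)) * emeasure lebesgue (cyl \<alpha> a))"
      using S(1) Fpos by (intro sum.cong refl cyl3_meas[OF \<alpha>]) auto
    finally have "ennreal (s/2) * emeasure lebesgue K \<le>
        ennreal (s/2) * (\<Sum>a\<in>S. ennreal (Kc TYPE('n)) * emeasure lebesgue (cyl \<alpha> a))"
      by (rule mult_left_mono) simp
    also have "\<dots> = ennreal (Kc TYPE('n)) * (\<Sum>a\<in>S. ennreal (s/2) * emeasure lebesgue (cyl \<alpha> a))"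
      by (simp add: sum_distrib_left mult_ac)
    also have "\<dots> \<le> ennreal (Kc TYPE('n)) * (\<Sum>a\<in>S. (\<integral>\<^sup>+y\<in>cyl \<alpha> a. u1 y \<partial>lebesgue))"
      using S(1) F(1) unfolding good_def by (intro mult_left_mono sum_mono) auto
    also have "(\<Sum>a\<in>S. (\<integral>\<^sup>+y\<in>cyl \<alpha> a. u1 y \<partial>lebesgue)) =
        (\<integral>\<^sup>+y. (\<Sum>a\<in>S. u1 y * indicator (cyl \<alpha> a) y) \<partial>lebesgue)"
      using u1m cs by (intro nn_integral_sum[symmetric]) auto
    also have "\<dots> \<le> (\<integral>\<^sup>+y. u1 y \<partial>lebesgue)"
    proof (rule nn_integral_mono)
      fix y
      have "(\<Sum>a\<in>S. u1 y * indicator (cyl \<alpha> a) y) = u1 y * (\<Sum>a\<in>S. indicator (cyl \<alpha> a) y)"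
        by (simp add: sum_distrib_left)
      also have "\<dots> = u1 y * indicator (\<Union>a\<in>S. cyl \<alpha> a) y"
        by (metis indicator_UN_disjoint[OF finS S(2)])
      also have "\<dots> \<le> u1 y" by (simp add: indicator_def)
      finally show "(\<Sum>a\<in>S. u1 y * indicator (cyl \<alpha> a) y) \<le> u1 y" .
    qed
    finally show "ennreal (s/2) * emeasure lebesgue K \<le> ennreal (Kc TYPE('n)) * (\<integral>\<^sup>+z. u1 z \<partial>lebesgue)"
      by (simp add: mult_left_mono)
  qed
  have "ennreal s * emeasure lebesgue E = 2 * (ennreal (s/2) * emeasure lebesgue E)"
  proof -
    have "ennreal (2 * (s/2)) = ennreal 2 * ennreal (s/2)" by (rule ennreal_mult) (use s in auto)
    hence "ennreal s = 2 * ennreal (s/2)" by simp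
    then show ?thesis by (simp add: mult.assoc)
  qed
  also have "\<dots> \<le> 2 * (ennreal (Kc TYPE('n)) * (\<integral>\<^sup>+z. u1 z \<partial>lebesgue))"
    using main by (rule mult_left_mono) simp
  also have "\<dots> = ennreal (2 * Kc TYPE('n)) * (\<integral>\<^sup>+z. u1 z \<partial>lebesgue)"
    using Kc_pos[where 'n='n] by (simp add: ennreal_mult mult.assoc)
  finally show ?thesis unfolding E_def u1_def .
qed


lemma Nder_eq:
  assumes "(f has_real_derivative D) (at t within {t..})"
  shows "Nder f t = D"
  unfolding Nder_def
proof (rule the_equality)
  show "(f has_real_derivative D) (at t within {t..})" by fact
  fix d assume "(f has_real_derivative d) (at t within {t..})"
  then have 1: "((\<lambda>y. (f y - f t) / (y - t)) \<longlongrightarrow> d) (at_right t)"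
    by (simp add: has_field_derivative_iff at_within_Ici_at_right)
  have 2: "((\<lambda>y. (f y - f t) / (y - t)) \<longlongrightarrow> D) (at_right t)"
    using assms by (simp add: has_field_derivative_iff at_within_Ici_at_right)
  show "d = D" using tendsto_unique[OF trivial_limit_at_right_real 1 2] .
qed

locale Nf =
  fixes \<phi> :: "real \<Rightarrow> real"
  assumes N: "N_function \<phi>" and St: "structural \<phi>"
begin

abbreviation "p \<equiv> Nder \<phi>"

lemma St_diff: "\<forall>t>0. \<phi> differentiable (at t)"
  using St[unfolded structural_def, THEN conjunct2, THEN conjunct1] .
lemma p_diff: "\<forall>t>0. p differentiable (at t)"
  using St[unfolded structural_def, THEN conjunct2, THEN conjunct2, THEN conjunct1] .
lemma St_c: "\<exists>c1 c2. 0 < c1 \<and> 0 < c2 \<and>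
        (\<forall>t>0. c1 * p t \<le> t * deriv p t \<and> t * deriv p t \<le> c2 * p t)"
  using St[unfolded structural_def, THEN conjunct2, THEN conjunct2, THEN conjunct2, THEN conjunct2] .

lemma der: "0 < t \<Longrightarrow> (\<phi> has_real_derivative p t) (at t)"
proof -
  assume t: "0 < t"
  have "\<phi> differentiable (at t)" using St_diff t by blast
  then have d: "(\<phi> has_real_derivative deriv \<phi> t) (at t)"
    by (simp add: DERIV_deriv_iff_real_differentiable)
  then have "p t = deriv \<phi> t" by (rule Nder_eq[OF has_field_derivative_at_within])
  with d show ?thesis by simp
qed

lemma phi0: "\<phi> 0 = 0" using N unfolding N_function_def by auto
lemma phi_nonneg: "0 \<le> t \<Longrightarrow> 0 \<le> \<phi> t" using N unfolding N_function_def by auto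
lemma p0: "p 0 = 0" using N unfolding N_function_def by auto
lemma ppos: "0 < t \<Longrightarrow> 0 < p t" using N unfolding N_function_def by auto
lemma pmono: "0 \<le> s \<Longrightarrow> s \<le> t \<Longrightarrow> p s \<le> p t"
  using N unfolding N_function_def by (auto intro: mono_onD)
lemma p_nonneg: "0 \<le> t \<Longrightarrow> 0 \<le> p t"
  using p0 pmono[of 0 t] by simp
lemma p_at_top: "filterlim p at_top at_top" using N unfolding N_function_def by auto

lemma cont: "continuous_on {0..} \<phi>"
proof (subst continuous_on_eq_continuous_within, intro ballI)
  fix x :: real assume x: "x \<in> {0..}"
  show "continuous (at x within {0..}) \<phi>"
  proof (cases "x = 0")
    case True
    obtain d where "(\<phi> has_real_derivative d) (at 0 within {0..})"
      using N unfolding N_function_def by auto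
    then show ?thesis using True by (simp add: DERIV_continuous)
  next
    case False
    then have "0 < x" using x by auto
    then show ?thesis by (rule continuous_at_imp_continuous_at_within[OF DERIV_isCont[OF der]])
  qed
qed

lemma mvt:
  assumes "0 \<le> u" "u < t"
  shows "\<exists>\<xi>. u < \<xi> \<and> \<xi> < t \<and> \<phi> t - \<phi> u = (t - u) * p \<xi>"
proof -
  have "continuous_on {u..t} \<phi>" using cont by (rule continuous_on_subset) (use assms in auto)
  moreover have "\<phi> differentiable (at x)" if "u < x" "x < t" for x
    using der[of x] that assms real_differentiable_def by auto
  ultimately obtain l z where z: "u < z" "z < t" "DERIV \<phi> z :> l" "\<phi> t - \<phi> u = (t - u) * l"
    using MVT[OF assms(2)] by blast
  have "l = p z" using DERIV_unique[OF z(3) der] z(1) assms by auto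
  with z show ?thesis by blast
qed

lemma phi_le: "0 \<le> t \<Longrightarrow> \<phi> t \<le> t * p t"
proof -
  assume t: "0 \<le> t"
  show ?thesis
  proof (cases "t = 0")
    case True then show ?thesis by (simp add: phi0)
  next
    case False
    then obtain \<xi> where "0 < \<xi>" "\<xi> < t" "\<phi> t - \<phi> 0 = (t - 0) * p \<xi>" using mvt[of 0 t] t by auto
    moreover have "p \<xi> \<le> p t" using pmono calculation by auto
    ultimately show ?thesis using t by (simp add: phi0 mult_left_mono)
  qed
qed

lemma phi_ge: "0 \<le> u \<Longrightarrow> u \<le> t \<Longrightarrow> \<phi> u + (t - u) * p u \<le> \<phi> t"
proof -
  assume u: "0 \<le> u" "u \<le> t"
  show ?thesis
  proof (cases "u = t")
    case True then show ?thesis by simp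
  next
    case False
    then obtain \<xi> where "u < \<xi>" "\<xi> < t" "\<phi> t - \<phi> u = (t - u) * p \<xi>" using mvt[of u t] u by auto
    moreover have "p u \<le> p \<xi>" using pmono calculation u by auto
    moreover have "(t - u) * p u \<le> (t - u) * p \<xi>" using calculation(4) u by (intro mult_left_mono) auto
    ultimately show ?thesis by linarith
  qed
qed

lemma phi_mono: "0 \<le> u \<Longrightarrow> u \<le> t \<Longrightarrow> \<phi> u \<le> \<phi> t"
proof -
  assume a: "0 \<le> u" "u \<le> t"
  have "0 \<le> (t - u) * p u" using a p_nonneg[of u] by simp
  then show ?thesis using phi_ge[OF a] by linarith
qed

end

context Nf begin

lemma ln_p_der:
  assumes x: "0 < x"
  shows "DERIV (\<lambda>x. ln (p x) - c * ln x) x :> (inverse (p x) * deriv p x - c * inverse x)"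
proof -
  have "p differentiable (at x)" using p_diff x by blast
  then have dp: "DERIV p x :> deriv p x" by (simp add: DERIV_deriv_iff_real_differentiable)
  have 1: "DERIV (\<lambda>x. ln (p x)) x :> inverse (p x) * deriv p x"
    by (rule DERIV_chain2[OF DERIV_ln[OF ppos[OF x]] dp])
  have 2: "DERIV (\<lambda>x. c * ln x) x :> c * inverse x"
    by (rule DERIV_cmult[OF DERIV_ln[OF x]])
  show ?thesis by (rule DERIV_diff[OF 1 2])
qed

lemma p_doubling: "\<exists>A B. 1 < B \<and> 0 < A \<and> (\<forall>t>0. B * p t \<le> p (2*t) \<and> p (2*t) \<le> A * p t)"
proof -
  obtain c1 c2 where c: "0 < c1" "0 < c2"
    "\<And>t. 0 < t \<Longrightarrow> c1 * p t \<le> t * deriv p t" "\<And>t. 0 < t \<Longrightarrow> t * deriv p t \<le> c2 * p t"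
    using St_c by blast
  have up: "p (2*t) \<le> 2 powr c2 * p t" if t: "0 < t" for t
  proof -
    have "ln (p (2*t)) - c2 * ln (2*t) \<le> ln (p t) - c2 * ln t"
    proof (rule DERIV_nonpos_imp_nonincreasing[of t "2*t"])
      show "t \<le> 2*t" using t by simp
      fix x assume x: "t \<le> x" "x \<le> 2*t"
      then have x0: "0 < x" using t by simp
      have "inverse (p x) * deriv p x - c2 * inverse x \<le> 0"
      proof -
        have "x * deriv p x \<le> c2 * p x" using c(4)[OF x0] .
        then have "deriv p x / p x \<le> c2 / x" using x0 ppos[OF x0]
          by (simp add: divide_simps mult.commute)
        then show ?thesis by (simp add: divide_inverse mult.commute)
      qed
      then show "\<exists>y. DERIV (\<lambda>x. ln (p x) - c2 * ln x) x :> y \<and> y \<le> 0"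
        using ln_p_der[OF x0] by blast
    qed
    then have "ln (p (2*t)) \<le> ln (p t) + c2 * ln 2" using t by (simp add: ln_mult algebra_simps)
    then have "exp (ln (p (2*t))) \<le> exp (ln (p t) + c2 * ln 2)" by simp
    then show ?thesis using ppos[OF t] ppos[of "2*t"] t by (simp add: exp_add powr_def mult.commute)
  qed
  have lo: "2 powr c1 * p t \<le> p (2*t)" if t: "0 < t" for t
  proof -
    have "ln (p t) - c1 * ln t \<le> ln (p (2*t)) - c1 * ln (2*t)"
    proof (rule DERIV_nonneg_imp_nondecreasing[of t "2*t"])
      show "t \<le> 2*t" using t by simp
      fix x assume x: "t \<le> x" "x \<le> 2*t"
      then have x0: "0 < x" using t by simp
      have "0 \<le> inverse (p x) * deriv p x - c1 * inverse x"
      proof -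
        have "c1 * p x \<le> x * deriv p x" using c(3)[OF x0] .
        then have "c1 / x \<le> deriv p x / p x" using x0 ppos[OF x0]
          by (simp add: divide_simps mult.commute)
        then show ?thesis by (simp add: divide_inverse mult.commute)
      qed
      then show "\<exists>y. DERIV (\<lambda>x. ln (p x) - c1 * ln x) x :> y \<and> 0 \<le> y"
        using ln_p_der[OF x0] by blast
    qed
    then have "ln (p t) + c1 * ln 2 \<le> ln (p (2*t))" using t by (simp add: ln_mult algebra_simps)
    then have "exp (ln (p t) + c1 * ln 2) \<le> exp (ln (p (2*t)))" by simp
    then show ?thesis using ppos[OF t] ppos[of "2*t"] t by (simp add: exp_add powr_def mult.commute)
  qed
  have "1 < 2 powr c1" using c(1) by simp
  moreover have "0 < 2 powr c2" by simp
  ultimately show ?thesis using up lo by blast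
qed

end

locale Nf2 = Nf +
  fixes A B :: real
  assumes B1: "1 < B" and A0: "0 < A"
    and dbl: "\<And>t. 0 < t \<Longrightarrow> B * p t \<le> p (2*t) \<and> p (2*t) \<le> A * p t"
begin

lemma p_low_pow: "0 < t \<Longrightarrow> B ^ N * p t \<le> p (2 ^ N * t)"
proof (induction N)
  case 0 then show ?case by simp
next
  case (Suc N)
  have "B ^ Suc N * p t = B * (B ^ N * p t)" by simp
  also have "\<dots> \<le> B * p (2 ^ N * t)" using Suc B1 by (intro mult_left_mono) auto
  also have "\<dots> \<le> p (2 * (2 ^ N * t))" using dbl[of "2^N*t"] Suc.prems by simp
  finally show ?case by (simp add: mult.assoc)
qed

lemma p_up_half: "0 < t \<Longrightarrow> p t \<le> A * p (t/2)"
  using dbl[of "t/2"] by simp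

definition "D = 4 * A\<^sup>2"

lemma D_pos: "0 < D" unfolding D_def using A0 by simp

lemma phi_dbl: "0 \<le> t \<Longrightarrow> \<phi> (2*t) \<le> D * \<phi> t"
proof (cases "t = 0")
  case True then show ?thesis by (simp add: phi0)
next
  case False
  assume t0: "0 \<le> t"
  then have t: "0 < t" using False by simp
  have "\<phi> (2*t) \<le> 2*t * p (2*t)" using phi_le[of "2*t"] t by simp
  also have "\<dots> \<le> 2*t * (A * p t)" using dbl[OF t] t by (intro mult_left_mono) auto
  also have "\<dots> \<le> 2*t * (A * (A * p (t/2)))"
    using p_up_half[OF t] t A0 by (intro mult_left_mono) auto
  also have "\<dots> = D * ((t/2) * p (t/2))" unfolding D_def by (simp add: power2_eq_square)
  also have "\<dots> \<le> D * \<phi> t"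
  proof -
    have "\<phi> (t/2) + (t - t/2) * p (t/2) \<le> \<phi> t" using phi_ge[of "t/2" t] t by simp
    moreover have "0 \<le> \<phi> (t/2)" using phi_nonneg t by simp
    ultimately have "(t/2) * p (t/2) \<le> \<phi> t" by simp
    then show ?thesis using D_pos by simp
  qed
  finally show ?thesis .
qed

lemma phi_pow: "0 \<le> t \<Longrightarrow> \<phi> (2 ^ N * t) \<le> D ^ N * \<phi> t"
proof (induction N)
  case 0 then show ?case by simp
next
  case (Suc N)
  have "\<phi> (2 ^ Suc N * t) = \<phi> (2 * (2 ^ N * t))" by (simp add: mult.assoc)
  also have "\<dots> \<le> D * \<phi> (2 ^ N * t)" using phi_dbl Suc.prems by simp
  also have "\<dots> \<le> D * (D ^ N * \<phi> t)" using Suc D_pos by (intro mult_left_mono) auto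
  finally show ?case by simp
qed

lemma phi_scale: "0 < k \<Longrightarrow> \<exists>C>0. \<forall>a\<ge>0. \<phi> a \<le> C * \<phi> (a / k)"
proof -
  assume k: "0 < k"
  obtain N :: nat where N: "k < 2 ^ N" using real_arch_pow[of 2 k] by auto
  have "\<phi> a \<le> D ^ N * \<phi> (a / k)" if a: "0 \<le> a" for a
  proof -
    have "a \<le> 2 ^ N * (a / k)"
    proof -
      have "a * k \<le> a * 2 ^ N" using a N by (intro mult_left_mono) auto
      then show ?thesis using k by (simp add: field_simps)
    qed
    then have "\<phi> a \<le> \<phi> (2 ^ N * (a / k))" using a k by (intro phi_mono) auto
    also have "\<dots> \<le> D ^ N * \<phi> (a / k)" using a k by (intro phi_pow) auto
    finally show ?thesis .
  qed
  then show ?thesis using D_pos by (intro exI[of _ "D^N"]) auto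
qed

definition "K1 = B / (B - 1)"

lemma K1_pos: "0 < K1" unfolding K1_def using B1 by simp

lemma T_bound:
  assumes g: "0 < \<gamma>"
  shows "0 < x \<Longrightarrow> (\<Sum>j\<in>{1..m}. p (2^j*\<gamma>) * (if 2^j*\<gamma> \<le> x then 1 else 0)) \<le> K1 * p x"
proof (induction m arbitrary: x)
  case 0 then show ?case using K1_pos p_nonneg[of x] by simp
next
  case (Suc m)
  have split: "(\<Sum>j\<in>{1..Suc m}. p (2^j*\<gamma>) * (if 2^j*\<gamma> \<le> x then 1 else 0)) =
     (\<Sum>j\<in>{1..m}. p (2^j*\<gamma>) * (if 2^j*\<gamma> \<le> x then 1 else 0)) +
     p (2^Suc m*\<gamma>) * (if 2^Suc m*\<gamma> \<le> x then 1 else 0)"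
    by (simp add: sum.atLeast1_atMost_eq)
  show ?case
  proof (cases "2^Suc m*\<gamma> \<le> x")
    case False
    then show ?thesis using split Suc.IH[OF Suc.prems] by simp
  next
    case True
    have eq: "(\<Sum>j\<in>{1..m}. p (2^j*\<gamma>) * (if 2^j*\<gamma> \<le> x then 1 else 0)) =
       (\<Sum>j\<in>{1..m}. p (2^j*\<gamma>) * (if 2^j*\<gamma> \<le> 2^m*\<gamma> then 1 else 0))"
    proof (rule sum.cong[OF refl])
      fix j assume j: "j \<in> {1..m}"
      have "(2::real)^j \<le> 2^m" using j by (intro power_increasing) auto
      then have a: "2^j*\<gamma> \<le> 2^m*\<gamma>" using g by simp
      have "(2::real)^m*\<gamma> \<le> 2^Suc m*\<gamma>" using g by simp
      then have "2^j*\<gamma> \<le> x" using a True by linarith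
      then show "p (2^j*\<gamma>) * (if 2^j*\<gamma> \<le> x then 1 else 0) =
         p (2^j*\<gamma>) * (if 2^j*\<gamma> \<le> 2^m*\<gamma> then 1 else 0)" using a by simp
    qed
    have "(\<Sum>j\<in>{1..m}. p (2^j*\<gamma>) * (if 2^j*\<gamma> \<le> 2^m*\<gamma> then 1 else 0)) \<le> K1 * p (2^m*\<gamma>)"
      by (rule Suc.IH) (use g in simp)
    also have "\<dots> \<le> K1 * (p (2^Suc m*\<gamma>) / B)"
    proof -
      have "B * p (2^m*\<gamma>) \<le> p (2*(2^m*\<gamma>))" using dbl[of "2^m*\<gamma>"] g by simp
      then have "p (2^m*\<gamma>) \<le> p (2^Suc m*\<gamma>) / B" using B1 by (simp add: field_simps mult.assoc)
      then show ?thesis using K1_pos by (intro mult_left_mono) auto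
    qed
    finally have "(\<Sum>j\<in>{1..Suc m}. p (2^j*\<gamma>) * (if 2^j*\<gamma> \<le> x then 1 else 0)) \<le>
        K1 * (p (2^Suc m*\<gamma>) / B) + p (2^Suc m*\<gamma>)"
      using split eq True by simp
    also have "\<dots> = K1 * p (2^Suc m*\<gamma>)" unfolding K1_def using B1 by (simp add: field_simps)
    also have "\<dots> \<le> K1 * p x" using True g K1_pos by (intro mult_left_mono pmono) auto
    finally show ?thesis .
  qed
qed

end

context Nf begin

lemma conj_bdd: "0 \<le> b \<Longrightarrow> bdd_above {s * b - \<phi> s | s. 0 \<le> s}"
proof -
  assume b: "0 \<le> b"
  have "\<forall>\<^sub>F x in at_top. b \<le> p x" using p_at_top by (simp add: filterlim_at_top)
  then obtain u0 where u0: "\<And>x. u0 \<le> x \<Longrightarrow> b \<le> p x" by (auto simp: eventually_at_top_linorder)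
  define u1 where "u1 = max u0 0"
  have u1: "0 \<le> u1" "b \<le> p u1" using u0 unfolding u1_def by auto
  have "s * b - \<phi> s \<le> u1 * b" if s: "0 \<le> s" for s
  proof (cases "u1 \<le> s")
    case True
    have "\<phi> u1 + (s - u1) * p u1 \<le> \<phi> s" using phi_ge[OF u1(1) True] .
    moreover have "(s - u1) * b \<le> (s - u1) * p u1" using True u1 by (intro mult_left_mono) auto
    moreover have "0 \<le> \<phi> u1" using phi_nonneg u1 by simp
    ultimately show ?thesis by (simp add: algebra_simps)
  next
    case False
    then have "s * b \<le> u1 * b" using b by (intro mult_right_mono) auto
    moreover have "0 \<le> \<phi> s" using phi_nonneg s by simp
    ultimately show ?thesis by simp
  qed
  then show ?thesis unfolding bdd_above_def by blast
qed

lemma conj_ge: "0 \<le> b \<Longrightarrow> 0 \<le> s \<Longrightarrow> s * b - \<phi> s \<le> conj_fn \<phi> b"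
  unfolding conj_fn_def by (rule cSup_upper) (use conj_bdd in auto)

lemma conj_nonneg: "0 \<le> b \<Longrightarrow> 0 \<le> conj_fn \<phi> b"
  using conj_ge[of b 0] by (simp add: phi0)

lemma conj_le: "(\<And>s. 0 \<le> s \<Longrightarrow> s * b - \<phi> s \<le> M) \<Longrightarrow> conj_fn \<phi> b \<le> M"
  unfolding conj_fn_def by (rule cSup_least) auto

lemma conj_zero: "conj_fn \<phi> 0 = 0"
proof -
  have "conj_fn \<phi> 0 \<le> 0" by (rule conj_le) (simp add: phi_nonneg)
  then show ?thesis using conj_nonneg[of 0] by simp
qed

lemma conj_mono: "0 \<le> b \<Longrightarrow> b \<le> b' \<Longrightarrow> conj_fn \<phi> b \<le> conj_fn \<phi> b'"
proof (rule conj_le)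
  fix s :: real assume b: "0 \<le> b" "b \<le> b'" and s: "0 \<le> s"
  have "s * b \<le> s * b'" using b s by (intro mult_left_mono)
  then show "s * b - \<phi> s \<le> conj_fn \<phi> b'" using conj_ge[of b' s] b s by simp
qed

end

context Nf2 begin

definition "N4 = (LEAST N. 4 \<le> B ^ N)"

lemma N4: "4 \<le> B ^ N4"
proof -
  obtain N :: nat where "4 < B ^ N" using real_arch_pow[OF B1] by blast
  then have "\<exists>N. 4 \<le> B ^ N" by (auto intro: less_imp_le)
  then show ?thesis unfolding N4_def by (rule LeastI_ex)
qed

lemma conj_lower:
  assumes s: "0 < s" and b: "0 \<le> b" and ps: "p s \<le> 2 * b"
  shows "s * b \<le> 2 ^ (N4 + 1) * conj_fn \<phi> b"
proof -
  define u where "u = s / 2 ^ N4"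
  have u: "0 < u" using s unfolding u_def by simp
  have su: "2 ^ N4 * u = s" unfolding u_def by simp
  have "B ^ N4 * p u \<le> p s" using p_low_pow[OF u, of N4] su by simp
  then have "4 * p u \<le> 2 * b" using N4 ps ppos[OF u]
    by (meson mult_right_mono less_imp_le order_trans)
  then have pu: "p u \<le> b / 2" by simp
  have "\<phi> u \<le> u * p u" using phi_le u by simp
  also have "\<dots> \<le> u * (b/2)" using pu u by (intro mult_left_mono) auto
  finally have "\<phi> u \<le> u * b / 2" by simp
  then have "u * b / 2 \<le> u * b - \<phi> u" by linarith
  also have "\<dots> \<le> conj_fn \<phi> b" using conj_ge[OF b] u by simp
  finally have "u * b / 2 \<le> conj_fn \<phi> b" .
  then have "u * b \<le> 2 * conj_fn \<phi> b" by simp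
  then have "2 ^ N4 * (u * b) \<le> 2 ^ N4 * (2 * conj_fn \<phi> b)" by (intro mult_left_mono) auto
  moreover have sb: "s * b = 2 ^ N4 * (u * b)" by (simp add: su[symmetric] mult.assoc)
  moreover have "2 ^ N4 * (2 * conj_fn \<phi> b) = 2 ^ (N4 + 1) * conj_fn \<phi> b" by simp
  ultimately show ?thesis by linarith
qed

definition "T4 = (2::real) ^ (N4 + 1)"

lemma T4_pos: "0 < T4" unfolding T4_def by simp

lemma phi_T4: "0 \<le> u \<Longrightarrow> 2 * T4 * \<phi> u \<le> \<phi> (T4 * u)"
proof (cases "u = 0")
  case True then show ?thesis by (simp add: phi0)
next
  case False
  assume u0: "0 \<le> u"
  then have u: "0 < u" using False by simp
  have h: "T4 * u / 2 = 2 ^ N4 * u" unfolding T4_def by simp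
  have "\<phi> (T4 * u / 2) + (T4 * u - T4 * u / 2) * p (T4 * u / 2) \<le> \<phi> (T4 * u)"
    using phi_ge[of "T4 * u / 2" "T4 * u"] u T4_pos by simp
  moreover have "0 \<le> \<phi> (T4 * u / 2)" using phi_nonneg u T4_pos by simp
  moreover have "T4 * u - T4 * u / 2 = 2 ^ N4 * u" using h by simp
  ultimately have 1: "(T4 * u / 2) * p (2 ^ N4 * u) \<le> \<phi> (T4 * u)" unfolding h by simp
  have "4 * p u \<le> B ^ N4 * p u" using N4 ppos[OF u] by (intro mult_right_mono) auto
  also have "\<dots> \<le> p (2 ^ N4 * u)" using p_low_pow[OF u] .
  finally have "(T4 * u / 2) * (4 * p u) \<le> (T4 * u / 2) * p (2 ^ N4 * u)"
    using u T4_pos by (intro mult_left_mono) auto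
  then have "2 * T4 * (u * p u) \<le> \<phi> (T4 * u)" using 1 by (simp add: algebra_simps)
  moreover have "2 * T4 * \<phi> u \<le> 2 * T4 * (u * p u)" using phi_le[OF u0] T4_pos by simp
  ultimately show ?thesis by linarith
qed

lemma conj_dbl: "0 \<le> b \<Longrightarrow> conj_fn \<phi> (2 * b) \<le> 2 * T4 * conj_fn \<phi> b"
proof (rule conj_le)
  fix s :: real assume b: "0 \<le> b" and s: "0 \<le> s"
  define u where "u = s / T4"
  have u: "0 \<le> u" "s = T4 * u" using s T4_pos unfolding u_def by auto
  have "s * (2 * b) - \<phi> s = 2 * T4 * (u * b) - \<phi> (T4 * u)" using u by (simp add: algebra_simps)
  also have "\<dots> \<le> 2 * T4 * (u * b) - 2 * T4 * \<phi> u" using phi_T4[OF u(1)] by simp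
  also have "\<dots> = 2 * T4 * (u * b - \<phi> u)" by (simp add: algebra_simps)
  also have "\<dots> \<le> 2 * T4 * conj_fn \<phi> b" using conj_ge[OF b u(1)] T4_pos by simp
  finally show "s * (2 * b) - \<phi> s \<le> 2 * T4 * conj_fn \<phi> b" .
qed

lemma conj_pow: "0 \<le> b \<Longrightarrow> conj_fn \<phi> (2 ^ N * b) \<le> (2 * T4) ^ N * conj_fn \<phi> b"
proof (induction N)
  case 0 then show ?case by simp
next
  case (Suc N)
  have "conj_fn \<phi> (2 ^ Suc N * b) = conj_fn \<phi> (2 * (2 ^ N * b))" by (simp add: mult.assoc)
  also have "\<dots> \<le> 2 * T4 * conj_fn \<phi> (2 ^ N * b)" using conj_dbl Suc.prems by simp
  also have "\<dots> \<le> 2 * T4 * ((2 * T4) ^ N * conj_fn \<phi> b)" using Suc T4_pos by (intro mult_left_mono) auto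
  finally show ?case by simp
qed

lemma conj_scale: "0 < k \<Longrightarrow> \<exists>C>0. \<forall>a\<ge>0. conj_fn \<phi> a \<le> C * conj_fn \<phi> (a / k)"
proof -
  assume k: "0 < k"
  obtain N :: nat where N: "k < 2 ^ N" using real_arch_pow[of 2 k] by auto
  have "conj_fn \<phi> a \<le> (2 * T4) ^ N * conj_fn \<phi> (a / k)" if a: "0 \<le> a" for a
  proof -
    have "a \<le> 2 ^ N * (a / k)"
    proof -
      have "a * k \<le> a * 2 ^ N" using a N by (intro mult_left_mono) auto
      then show ?thesis using k by (simp add: field_simps)
    qed
    then have "conj_fn \<phi> a \<le> conj_fn \<phi> (2 ^ N * (a / k))" using a k by (intro conj_mono) auto
    also have "\<dots> \<le> (2 * T4) ^ N * conj_fn \<phi> (a / k)" using a k by (intro conj_pow) auto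
    finally show ?thesis .
  qed
  then show ?thesis using T4_pos by (intro exI[of _ "(2 * T4)^N"]) auto
qed

end

lemma geom2: "(\<Sum>j\<in>{1..m}. (2::real)^j) = 2^(m+1) - 2"
  by (induction m) (auto simp: sum.atLeast1_atMost_eq)

lemma term_aux:
  fixes X P a :: real
  assumes "0 \<le> X" "X \<le> P" "0 \<le> a" "Q \<Longrightarrow> R"
  shows "X * a * (if Q then 1 else 0) \<le> a * (P * (if R then 1 else 0))"
proof (cases Q)
  case True
  then have "R" using assms(4) by blast
  have "X * a \<le> P * a" using assms(2,3) by (rule mult_right_mono)
  then show ?thesis using True \<open>R\<close> by (simp add: mult.commute)
next
  case False
  have "0 \<le> P" using assms(1,2) by linarith
  then show ?thesis using False assms(3) by simp
qed

context Nf2 begin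

lemma U_bound:
  assumes g: "0 < \<gamma>" and s: "0 \<le> s"
  shows "(\<forall>j\<in>{1..m}. p (2^j*\<gamma>) < y \<longrightarrow> 2^j*\<gamma> \<le> s) \<Longrightarrow>
    (\<Sum>j\<in>{1..m}. 2^j*\<gamma> * (if p (2^j*\<gamma>) < y then 1 else 0)) \<le> 2 * s"
proof (induction m)
  case 0 then show ?case using s by simp
next
  case (Suc m)
  have split: "(\<Sum>j\<in>{1..Suc m}. 2^j*\<gamma> * (if p (2^j*\<gamma>) < y then 1 else 0)) =
     (\<Sum>j\<in>{1..m}. 2^j*\<gamma> * (if p (2^j*\<gamma>) < y then 1 else 0)) +
     2^Suc m*\<gamma> * (if p (2^Suc m*\<gamma>) < y then 1 else 0)"
    by (simp add: sum.atLeast1_atMost_eq)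
  have IH: "(\<Sum>j\<in>{1..m}. 2^j*\<gamma> * (if p (2^j*\<gamma>) < y then 1 else 0)) \<le> 2 * s"
    using Suc by auto
  show ?case
  proof (cases "p (2^Suc m*\<gamma>) < y")
    case False then show ?thesis using split IH by simp
  next
    case True
    then have le: "2^Suc m*\<gamma> \<le> s" using Suc.prems[rule_format, of "Suc m"] by simp
    have "(\<Sum>j\<in>{1..m}. 2^j*\<gamma> * (if p (2^j*\<gamma>) < y then 1 else 0)) \<le> (\<Sum>j\<in>{1..m}. 2^j*\<gamma>)"
      using g by (intro sum_mono) auto
    also have "\<dots> = (\<Sum>j\<in>{1..m}. (2::real)^j) * \<gamma>" by (simp add: sum_distrib_right)
    also have "\<dots> = (2^(m+1) - 2) * \<gamma>" using geom2[of m] by simp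
    also have "\<dots> \<le> 2^Suc m*\<gamma>" using g by (simp add: algebra_simps)
    finally show ?thesis using split True le by simp
  qed
qed

definition "C1 = K1 * A * D"

lemma f_point:
  assumes g: "0 < \<gamma>" and a: "0 \<le> a"
  shows "(\<Sum>j\<in>{1..m}. \<phi> (2^j*\<gamma>) / (2^j*\<gamma>) * a * (if 2^j*\<gamma>/2 < a then 1 else 0)) \<le> C1 * \<phi> a"
proof (cases "a = 0")
  case True then show ?thesis unfolding C1_def using phi0 by simp
next
  case False
  then have a0: "0 < a" using a by simp
  have "(\<Sum>j\<in>{1..m}. \<phi> (2^j*\<gamma>) / (2^j*\<gamma>) * a * (if 2^j*\<gamma>/2 < a then 1 else 0)) \<le>
     (\<Sum>j\<in>{1..m}. a * (p (2^j*\<gamma>) * (if 2^j*\<gamma> \<le> 2*a then 1 else 0)))"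
  proof (rule sum_mono)
    fix j assume "j \<in> {1..m}"
    have l: "0 < 2^j*\<gamma>" using g by simp
    have "\<phi> (2^j*\<gamma>) / (2^j*\<gamma>) \<le> p (2^j*\<gamma>)" using phi_le[of "2^j*\<gamma>"] l by (simp add: divide_simps mult.commute)
    moreover have "0 \<le> \<phi> (2^j*\<gamma>) / (2^j*\<gamma>)" using phi_nonneg l by simp
    ultimately show "\<phi> (2^j*\<gamma>) / (2^j*\<gamma>) * a * (if 2^j*\<gamma>/2 < a then 1 else 0) \<le>
        a * (p (2^j*\<gamma>) * (if 2^j*\<gamma> \<le> 2*a then 1 else 0))"
      using a by (intro term_aux) auto
  qed
  also have "\<dots> = a * (\<Sum>j\<in>{1..m}. p (2^j*\<gamma>) * (if 2^j*\<gamma> \<le> 2*a then 1 else 0))"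
    by (simp add: sum_distrib_left)
  also have "\<dots> \<le> a * (K1 * p (2*a))" using T_bound[OF g, of "2*a" m] a0 by (intro mult_left_mono) auto
  also have "\<dots> \<le> a * (K1 * (A * p a))" using dbl[OF a0] K1_pos a by (intro mult_left_mono) auto
  also have "\<dots> = K1 * A * (a * p a)" by (simp add: algebra_simps)
  also have "\<dots> \<le> K1 * A * \<phi> (2*a)"
  proof -
    have "\<phi> a + (2*a - a) * p a \<le> \<phi> (2*a)" using phi_ge[of a "2*a"] a by simp
    then have "a * p a \<le> \<phi> (2*a)" using phi_nonneg[OF a] by simp
    then show ?thesis using K1_pos A0 by simp
  qed
  also have "\<dots> \<le> K1 * A * (D * \<phi> a)" using phi_dbl[OF a] K1_pos A0 by simp
  finally show ?thesis unfolding C1_def by (simp add: mult.assoc)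
qed

definition "C2 = 2 * 2 ^ (N4 + 1)"

lemma g_point:
  assumes g: "0 < \<gamma>" and b: "0 \<le> b"
  shows "(\<Sum>j\<in>{1..m}. \<phi> (2^j*\<gamma>) / p (2^j*\<gamma>) * b * (if p (2^j*\<gamma>)/2 < b then 1 else 0)) \<le> C2 * conj_fn \<phi> b"
proof -
  have "(\<Sum>j\<in>{1..m}. \<phi> (2^j*\<gamma>) / p (2^j*\<gamma>) * b * (if p (2^j*\<gamma>)/2 < b then 1 else 0)) \<le>
     (\<Sum>j\<in>{1..m}. b * (2^j*\<gamma> * (if p (2^j*\<gamma>) < 2*b then 1 else 0)))"
  proof (rule sum_mono)
    fix j assume "j \<in> {1..m}"
    have l: "0 < 2^j*\<gamma>" using g by simp
    have pl: "0 < p (2^j*\<gamma>)" using ppos l by simp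
    have "\<phi> (2^j*\<gamma>) / p (2^j*\<gamma>) \<le> 2^j*\<gamma>" using phi_le[of "2^j*\<gamma>"] l pl by (simp add: divide_simps)
    moreover have "0 \<le> \<phi> (2^j*\<gamma>) / p (2^j*\<gamma>)" using phi_nonneg l pl by simp
    ultimately show "\<phi> (2^j*\<gamma>) / p (2^j*\<gamma>) * b * (if p (2^j*\<gamma>)/2 < b then 1 else 0) \<le>
        b * (2^j*\<gamma> * (if p (2^j*\<gamma>) < 2*b then 1 else 0))"
      using b by (intro term_aux) auto
  qed
  also have "\<dots> = b * (\<Sum>j\<in>{1..m}. 2^j*\<gamma> * (if p (2^j*\<gamma>) < 2*b then 1 else 0))"
    by (simp add: sum_distrib_left)
  also have "\<dots> \<le> C2 * conj_fn \<phi> b"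
  proof (cases "{j\<in>{1..m}. p (2^j*\<gamma>) < 2*b} = {}")
    case True
    then have "(\<Sum>j\<in>{1..m}. 2^j*\<gamma> * (if p (2^j*\<gamma>) < 2*b then 1 else 0)) = (0::real)"
      by (intro sum.neutral) auto
    then show ?thesis using conj_nonneg[OF b] unfolding C2_def by simp
  next
    case False
    define act where "act = {j\<in>{1..m}. p (2^j*\<gamma>) < 2*b}"
    define s where "s = Max ((\<lambda>j. 2^j*\<gamma>) ` act)"
    have fin: "finite act" unfolding act_def by simp
    have "s \<in> (\<lambda>j. 2^j*\<gamma>) ` act" unfolding s_def using fin False act_def by (intro Max_in) auto
    then obtain j0 where j0: "j0 \<in> act" "s = 2^j0*\<gamma>" by auto
    have s0: "0 < s" using j0 g by simp
    have ps: "p s \<le> 2 * b" using j0 unfolding act_def by auto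
    have "\<forall>j\<in>{1..m}. p (2^j*\<gamma>) < 2*b \<longrightarrow> 2^j*\<gamma> \<le> s"
      unfolding s_def act_def using fin act_def by (auto intro!: Max_ge)
    then have "(\<Sum>j\<in>{1..m}. 2^j*\<gamma> * (if p (2^j*\<gamma>) < 2*b then 1 else 0)) \<le> 2 * s"
      by (rule U_bound[OF g less_imp_le[OF s0]])
    then have "b * (\<Sum>j\<in>{1..m}. 2^j*\<gamma> * (if p (2^j*\<gamma>) < 2*b then 1 else 0)) \<le> b * (2 * s)"
      using b by (intro mult_left_mono) auto
    also have "\<dots> = 2 * (s * b)" by simp
    also have "\<dots> \<le> 2 * (2 ^ (N4 + 1) * conj_fn \<phi> b)" using conj_lower[OF s0 b ps] by (intro mult_left_mono) auto
    finally show ?thesis unfolding C2_def by (simp add: mult.assoc)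
  qed
  finally show ?thesis .
qed

end

context Nf2 begin

lemma phi_borel: "(\<lambda>x. \<phi> (max 0 x)) \<in> borel_measurable borel"
  by (rule borel_measurable_mono) (auto simp: mono_def intro: phi_mono)

lemma conj_borel: "(\<lambda>x. conj_fn \<phi> (max 0 x)) \<in> borel_measurable borel"
  by (rule borel_measurable_mono) (auto simp: mono_def intro: conj_mono)

lemma phi_norm_meas:
  assumes fm: "(\<lambda>z. indicator Q z *\<^sub>R F z) \<in> borel_measurable M"
  shows "(\<lambda>z. indicator Q z * \<phi> (norm (F z))) \<in> borel_measurable M"
proof -
  have m: "(\<lambda>z. \<phi> (max 0 (norm (indicator Q z *\<^sub>R F z)))) \<in> borel_measurable M"
    by (rule measurable_compose[OF _ phi_borel]) (use fm in measurable)
  have "(\<lambda>z. \<phi> (max 0 (norm (indicator Q z *\<^sub>R F z)))) = (\<lambda>z. indicator Q z * \<phi> (norm (F z)))"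
    by (auto simp: indicator_def phi0 fun_eq_iff)
  with m show ?thesis by simp
qed

lemma conj_norm_meas:
  assumes fm: "(\<lambda>z. indicator Q z *\<^sub>R F z) \<in> borel_measurable M"
  shows "(\<lambda>z. indicator Q z * conj_fn \<phi> (norm (F z))) \<in> borel_measurable M"
proof -
  have m: "(\<lambda>z. conj_fn \<phi> (max 0 (norm (indicator Q z *\<^sub>R F z)))) \<in> borel_measurable M"
    by (rule measurable_compose[OF _ conj_borel]) (use fm in measurable)
  have "(\<lambda>z. conj_fn \<phi> (max 0 (norm (indicator Q z *\<^sub>R F z)))) = (\<lambda>z. indicator Q z * conj_fn \<phi> (norm (F z)))"
    by (auto simp: indicator_def conj_zero fun_eq_iff)
  with m show ?thesis by simp
qed

lemma integr_gen:
  fixes \<psi> :: "real \<Rightarrow> real"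
  assumes fm: "(\<lambda>z. indicator Q z *\<^sub>R F z) \<in> borel_measurable M"
    and psib: "(\<lambda>x. \<psi> (max 0 x)) \<in> borel_measurable borel" and psiz: "\<psi> 0 = 0"
    and psi0: "\<And>a. 0 \<le> a \<Longrightarrow> 0 \<le> \<psi> a"
    and sc: "\<And>a. 0 \<le> a \<Longrightarrow> \<psi> a \<le> C * \<psi> (a / k)" and C: "0 < C" and k: "0 < k"
    and fin: "(\<integral>\<^sup>+x\<in>Q. ennreal (\<psi> (norm (F x) / k)) \<partial>M) < \<infinity>"
  shows "integrable M (\<lambda>z. indicator Q z * \<psi> (norm (F z)))"
proof -
  have m1: "(\<lambda>z. \<psi> (max 0 (norm (indicator Q z *\<^sub>R F z)))) \<in> borel_measurable M"
    by (rule measurable_compose[OF _ psib]) (use fm in measurable)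
  have "(\<lambda>z. \<psi> (max 0 (norm (indicator Q z *\<^sub>R F z)))) = (\<lambda>z. indicator Q z * \<psi> (norm (F z)))"
    by (auto simp: indicator_def psiz fun_eq_iff)
  with m1 have meas: "(\<lambda>z. indicator Q z * \<psi> (norm (F z))) \<in> borel_measurable M" by simp
  have m2: "(\<lambda>z. \<psi> (max 0 (norm (indicator Q z *\<^sub>R F z) / k))) \<in> borel_measurable M"
    by (rule measurable_compose[OF _ psib]) (use fm in measurable)
  have "(\<lambda>z. \<psi> (max 0 (norm (indicator Q z *\<^sub>R F z) / k))) = (\<lambda>z. \<psi> (norm (F z) / k) * indicator Q z)"
    using k by (auto simp: indicator_def psiz fun_eq_iff)
  with m2 have meas2: "(\<lambda>z. \<psi> (norm (F z) / k) * indicator Q z) \<in> borel_measurable M" by simp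
  have meas3: "(\<lambda>z. ennreal (\<psi> (norm (F z) / k)) * indicator Q z) \<in> borel_measurable M"
  proof -
    have "(\<lambda>z. ennreal (\<psi> (norm (F z) / k) * indicator Q z)) \<in> borel_measurable M"
      using meas2 by measurable
    moreover have "(\<lambda>z. ennreal (\<psi> (norm (F z) / k) * indicator Q z)) = (\<lambda>z. ennreal (\<psi> (norm (F z) / k)) * indicator Q z)"
      by (auto simp: indicator_def fun_eq_iff)
    ultimately show ?thesis by simp
  qed
  show ?thesis
  proof (rule integrableI_nonneg[OF meas])
    show "AE x in M. 0 \<le> indicator Q x * \<psi> (norm (F x))" using psi0 by (auto simp: indicator_def)
    have "(\<integral>\<^sup>+x. ennreal (indicator Q x * \<psi> (norm (F x))) \<partial>M) \<le>
        (\<integral>\<^sup>+x. ennreal C * (ennreal (\<psi> (norm (F x) / k)) * indicator Q x) \<partial>M)"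
    proof (rule nn_integral_mono)
      fix x
      show "ennreal (indicator Q x * \<psi> (norm (F x))) \<le> ennreal C * (ennreal (\<psi> (norm (F x) / k)) * indicator Q x)"
      proof (cases "x \<in> Q")
        case True
        have "\<psi> (norm (F x)) \<le> C * \<psi> (norm (F x) / k)" using sc by simp
        moreover have "0 \<le> \<psi> (norm (F x) / k)" using psi0 k by simp
        ultimately show ?thesis using True C by (simp add: ennreal_mult[symmetric] ennreal_leI)
      qed simp
    qed
    also have "\<dots> = ennreal C * (\<integral>\<^sup>+x\<in>Q. ennreal (\<psi> (norm (F x) / k)) \<partial>M)"
      by (rule nn_integral_cmult[OF meas3])
    also have "\<dots> < \<infinity>" using fin by (simp add: ennreal_mult_less_top)
    finally show "(\<integral>\<^sup>+x. ennreal (indicator Q x * \<psi> (norm (F x))) \<partial>M) < \<infinity>" .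
  qed
qed

end

lemma cmult_ennreal_int:
  assumes c: "0 \<le> c" and h: "\<And>z. 0 \<le> h z" and hm: "h \<in> borel_measurable M"
  shows "ennreal c * (\<integral>\<^sup>+z. ennreal (h z) \<partial>M) = (\<integral>\<^sup>+z. ennreal (c * h z) \<partial>M)"
proof -
  have "ennreal c * (\<integral>\<^sup>+z. ennreal (h z) \<partial>M) = (\<integral>\<^sup>+z. ennreal c * ennreal (h z) \<partial>M)"
    by (rule nn_integral_cmult[symmetric]) (use hm in measurable)
  also have "\<dots> = (\<integral>\<^sup>+z. ennreal (c * h z) \<partial>M)"
    using c h by (intro nn_integral_cong) (simp add: ennreal_mult)
  finally show ?thesis .
qed

lemma trunc_eq: "ennreal (norm (f z)) * indicator {z. s < norm (f z)} z =
   ennreal (norm (f z) * (if s < norm (f z) then 1 else 0))"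
  by (auto simp: indicator_def)

context Nf2 begin

lemma level_bound:
  fixes f g :: "real \<times> 'n::euclidean_space \<Rightarrow> 'b::real_normed_vector"
  assumes fm: "f \<in> borel_measurable lebesgue" and gm: "g \<in> borel_measurable lebesgue" and lam: "0 < lam"
  shows "ennreal (\<phi> lam) * (emeasure lebesgue {z. ennreal lam < maxfn (lam / p lam) f z}
      + emeasure lebesgue {z. ennreal (p lam) < maxfn (lam / p lam) g z}) \<le>
    (\<integral>\<^sup>+z. ennreal (2 * Kc TYPE('n) * (\<phi> lam / lam) * (norm (f z) * (if lam/2 < norm (f z) then 1 else 0))
        + 2 * Kc TYPE('n) * (\<phi> lam / p lam) * (norm (g z) * (if p lam/2 < norm (g z) then 1 else 0))) \<partial>lebesgue)"
proof -
  have pl: "0 < p lam" using ppos lam by simp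
  have al: "0 < lam / p lam" using pl lam by simp
  have phl: "0 \<le> \<phi> lam" using phi_nonneg lam by simp
  define K where "K = 2 * Kc TYPE('n)"
  have K0: "0 < K" unfolding K_def using Kc_pos[where 'n='n] by simp
  define hf where "hf z = norm (f z) * (if lam/2 < norm (f z) then 1 else 0)" for z
  define hg where "hg z = norm (g z) * (if p lam/2 < norm (g z) then 1 else 0)" for z
  have hfm: "hf \<in> borel_measurable lebesgue" unfolding hf_def using fm by measurable
  have hgm: "hg \<in> borel_measurable lebesgue" unfolding hg_def using gm by measurable
  have hf0: "\<And>z. 0 \<le> hf z" unfolding hf_def by simp
  have hg0: "\<And>z. 0 \<le> hg z" unfolding hg_def by simp
  define Xf where "Xf = emeasure lebesgue {z. ennreal lam < maxfn (lam / p lam) f z}"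
  define Xg where "Xg = emeasure lebesgue {z. ennreal (p lam) < maxfn (lam / p lam) g z}"
  have wf: "ennreal lam * Xf \<le> ennreal K * (\<integral>\<^sup>+z. ennreal (hf z) \<partial>lebesgue)"
    using weak_type[OF fm al lam] unfolding Xf_def K_def hf_def trunc_eq .
  have wg: "ennreal (p lam) * Xg \<le> ennreal K * (\<integral>\<^sup>+z. ennreal (hg z) \<partial>lebesgue)"
    using weak_type[OF gm al pl] unfolding Xg_def K_def hg_def trunc_eq .
  have ef: "ennreal (\<phi> lam) = ennreal (\<phi> lam / lam) * ennreal lam"
    using lam phl by (simp add: ennreal_mult[symmetric])
  have eg: "ennreal (\<phi> lam) = ennreal (\<phi> lam / p lam) * ennreal (p lam)"
    using pl phl by (simp add: ennreal_mult[symmetric])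
  have "ennreal (\<phi> lam) * Xf \<le> ennreal (\<phi> lam / lam) * (ennreal K * (\<integral>\<^sup>+z. ennreal (hf z) \<partial>lebesgue))"
    unfolding ef mult.assoc by (rule mult_left_mono[OF wf]) simp
  also have "\<dots> = ennreal (K * (\<phi> lam / lam)) * (\<integral>\<^sup>+z. ennreal (hf z) \<partial>lebesgue)"
  proof -
    have e: "ennreal (K * (\<phi> lam / lam)) = ennreal K * ennreal (\<phi> lam / lam)"
      by (rule ennreal_mult) (use K0 lam phl in auto)
    show ?thesis unfolding e mult.assoc by (rule mult.left_commute)
  qed
  also have "\<dots> = (\<integral>\<^sup>+z. ennreal (K * (\<phi> lam / lam) * hf z) \<partial>lebesgue)"
    using K0 lam phl by (intro cmult_ennreal_int hf0 hfm) auto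
  finally have 1: "ennreal (\<phi> lam) * Xf \<le> (\<integral>\<^sup>+z. ennreal (K * (\<phi> lam / lam) * hf z) \<partial>lebesgue)" .
  have "ennreal (\<phi> lam) * Xg \<le> ennreal (\<phi> lam / p lam) * (ennreal K * (\<integral>\<^sup>+z. ennreal (hg z) \<partial>lebesgue))"
    unfolding eg mult.assoc by (rule mult_left_mono[OF wg]) simp
  also have "\<dots> = ennreal (K * (\<phi> lam / p lam)) * (\<integral>\<^sup>+z. ennreal (hg z) \<partial>lebesgue)"
  proof -
    have e: "ennreal (K * (\<phi> lam / p lam)) = ennreal K * ennreal (\<phi> lam / p lam)"
      by (rule ennreal_mult) (use K0 pl phl in auto)
    show ?thesis unfolding e mult.assoc by (rule mult.left_commute)
  qed
  also have "\<dots> = (\<integral>\<^sup>+z. ennreal (K * (\<phi> lam / p lam) * hg z) \<partial>lebesgue)"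
    using K0 pl phl by (intro cmult_ennreal_int hg0 hgm) auto
  finally have 2: "ennreal (\<phi> lam) * Xg \<le> (\<integral>\<^sup>+z. ennreal (K * (\<phi> lam / p lam) * hg z) \<partial>lebesgue)" .
  have "ennreal (\<phi> lam) * (Xf + Xg) \<le>
     (\<integral>\<^sup>+z. ennreal (K * (\<phi> lam / lam) * hf z) \<partial>lebesgue) + (\<integral>\<^sup>+z. ennreal (K * (\<phi> lam / p lam) * hg z) \<partial>lebesgue)"
    using add_mono[OF 1 2] by (simp add: distrib_left)
  also have "\<dots> = (\<integral>\<^sup>+z. ennreal (K * (\<phi> lam / lam) * hf z) + ennreal (K * (\<phi> lam / p lam) * hg z) \<partial>lebesgue)"
  proof -
    have m1: "(\<lambda>z. ennreal (K * (\<phi> lam / lam) * hf z)) \<in> borel_measurable lebesgue" using hfm by measurable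
    have m2: "(\<lambda>z. ennreal (K * (\<phi> lam / p lam) * hg z)) \<in> borel_measurable lebesgue" using hgm by measurable
    show ?thesis by (rule nn_integral_add[symmetric, OF m1 m2])
  qed
  also have "\<dots> = (\<integral>\<^sup>+z. ennreal (K * (\<phi> lam / lam) * hf z + K * (\<phi> lam / p lam) * hg z) \<partial>lebesgue)"
    using K0 lam pl phl hf0 hg0 by (intro nn_integral_cong) (simp add: ennreal_plus)
  finally show ?thesis unfolding Xf_def Xg_def K_def hf_def hg_def .
qed

end

context Nf2 begin

definition "cc (_::'n::euclidean_space itself) = 2 * Kc TYPE('n) * (C1 + C2)"

lemma C1_pos: "0 < C1" unfolding C1_def using K1_pos A0 D_pos by simp
lemma C2_pos: "0 < (C2::real)" unfolding C2_def by simp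

lemma phi_pos: "0 < t \<Longrightarrow> 0 < \<phi> t"
proof -
  assume t: "0 < t"
  have "\<phi> (t/2) + (t - t/2) * p (t/2) \<le> \<phi> t" using phi_ge[of "t/2" t] t by simp
  moreover have "0 \<le> \<phi> (t/2)" using phi_nonneg t by simp
  moreover have "0 < (t - t/2) * p (t/2)" using ppos[of "t/2"] t by simp
  ultimately show ?thesis by linarith
qed

lemma main:
  fixes Q :: "(real \<times> 'n::euclidean_space) set" and Dw G :: "real \<times> 'n \<Rightarrow> 'n"
  assumes fm: "(\<lambda>z. indicator Q z *\<^sub>R Dw z) \<in> borel_measurable lebesgue"
    and gm: "(\<lambda>z. indicator Q z *\<^sub>R G z) \<in> borel_measurable lebesgue"
    and intf: "integrable lebesgue (\<lambda>z. indicator Q z * \<phi> (norm (Dw z)))"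
    and intg: "integrable lebesgue (\<lambda>z. indicator Q z * conj_fn \<phi> (norm (G z)))"
    and g: "0 < \<gamma>" and m0: "1 \<le> m0"
    and eq: "\<phi> \<gamma> = (LINT z:Q|lebesgue. \<phi> (norm (Dw z))) / measure lebesgue Q
           + (LINT z:Q|lebesgue. conj_fn \<phi> (norm (G z))) / measure lebesgue Q"
  shows "\<exists>lam. \<gamma> \<le> lam \<and> lam \<le> 2 ^ m0 * \<gamma> \<and>
          emeasure lebesgue {z. ennreal lam < maxfn (lam / Nder \<phi> lam) (\<lambda>z. indicator Q z *\<^sub>R Dw z) z}
        + emeasure lebesgue {z. ennreal (Nder \<phi> lam) < maxfn (lam / Nder \<phi> lam) (\<lambda>z. indicator Q z *\<^sub>R G z) z}
        \<le> ennreal (cc TYPE('n) * \<phi> \<gamma> / (real m0 * \<phi> lam) * measure lebesgue Q)"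
proof -
  define f where "f z = indicator Q z *\<^sub>R Dw z" for z
  define g' where "g' z = indicator Q z *\<^sub>R G z" for z
  define Ff where "Ff z = indicator Q z * \<phi> (norm (Dw z))" for z
  define Fg where "Fg z = indicator Q z * conj_fn \<phi> (norm (G z))" for z
  define \<mu> where "\<mu> = measure lebesgue Q"
  define IF where "IF = integral\<^sup>L lebesgue Ff"
  define IG where "IG = integral\<^sup>L lebesgue Fg"
  define K where "K = 2 * Kc TYPE('n)"
  have iF: "integrable lebesgue Ff" using intf unfolding Ff_def[abs_def] .
  have iG: "integrable lebesgue Fg" using intg unfolding Fg_def[abs_def] .
  have K0: "0 < K" unfolding K_def using Kc_pos[where 'n='n] by simp
  have fm': "f \<in> borel_measurable lebesgue" unfolding f_def using fm .
  have gm': "g' \<in> borel_measurable lebesgue" unfolding g'_def using gm .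
  have Ff_eq: "\<phi> (norm (f z)) = Ff z" for z unfolding f_def Ff_def by (auto simp: indicator_def phi0)
  have Fg_eq: "conj_fn \<phi> (norm (g' z)) = Fg z" for z unfolding g'_def Fg_def by (auto simp: indicator_def conj_zero)
  have Ff0: "0 \<le> Ff z" for z unfolding Ff_def by (auto simp: indicator_def phi_nonneg)
  have Fg0: "0 \<le> Fg z" for z unfolding Fg_def by (auto simp: indicator_def conj_nonneg)
  have eq': "\<phi> \<gamma> = IF / \<mu> + IG / \<mu>"
    using eq unfolding IF_def IG_def \<mu>_def Ff_def Fg_def set_lebesgue_integral_def by simp
  have phig: "0 < \<phi> \<gamma>" using phi_pos g by simp
  have mu0: "0 < \<mu>"
  proof -
    have "\<mu> \<noteq> 0" using eq' phig by auto
    moreover have "0 \<le> \<mu>" unfolding \<mu>_def by simp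
    ultimately show ?thesis by simp
  qed
  have IFG: "IF + IG = \<phi> \<gamma> * \<mu>" using eq' mu0 by (simp add: field_simps)
  define lam where "lam j = 2 ^ j * \<gamma>" for j :: nat
  have lam0: "0 < lam j" for j unfolding lam_def using g by simp
  define R where "R j z = K * (\<phi> (lam j) / lam j) * (norm (f z) * (if lam j/2 < norm (f z) then 1 else 0))
        + K * (\<phi> (lam j) / p (lam j)) * (norm (g' z) * (if p (lam j)/2 < norm (g' z) then 1 else 0))" for j z
  define X where "X j = emeasure lebesgue {z. ennreal (lam j) < maxfn (lam j / p (lam j)) f z}
      + emeasure lebesgue {z. ennreal (p (lam j)) < maxfn (lam j / p (lam j)) g' z}" for j
  define V where "V j = ennreal (\<phi> (lam j)) * X j" for j
  have R0: "0 \<le> R j z" for j z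
  proof -
    have "0 \<le> \<phi> (lam j)" "0 < p (lam j)" using phi_nonneg[OF less_imp_le[OF lam0]] ppos[OF lam0] by auto
    then show ?thesis unfolding R_def using K0 lam0[of j] by simp
  qed
  have Rm: "(\<lambda>z. ennreal (R j z)) \<in> borel_measurable lebesgue" for j
    unfolding R_def using fm' gm' by measurable
  have VR: "V j \<le> (\<integral>\<^sup>+z. ennreal (R j z) \<partial>lebesgue)" for j
    unfolding V_def X_def R_def K_def by (rule level_bound[OF fm' gm' lam0])
  have "(\<Sum>j\<in>{1..m0}. V j) \<le> (\<Sum>j\<in>{1..m0}. (\<integral>\<^sup>+z. ennreal (R j z) \<partial>lebesgue))"
    by (intro sum_mono VR)
  also have "\<dots> = (\<integral>\<^sup>+z. (\<Sum>j\<in>{1..m0}. ennreal (R j z)) \<partial>lebesgue)"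
    by (rule nn_integral_sum[symmetric]) (rule Rm)
  also have "\<dots> = (\<integral>\<^sup>+z. ennreal (\<Sum>j\<in>{1..m0}. R j z) \<partial>lebesgue)"
    using R0 by (intro nn_integral_cong sum_ennreal) auto
  also have "\<dots> \<le> (\<integral>\<^sup>+z. ennreal (K * (C1 + C2) * (Ff z + Fg z)) \<partial>lebesgue)"
  proof (rule nn_integral_mono, rule ennreal_leI)
    fix z
    define a where "a = norm (f z)"
    define b where "b = norm (g' z)"
    have a0: "0 \<le> a" and b0: "0 \<le> b" unfolding a_def b_def by auto
    have "(\<Sum>j\<in>{1..m0}. R j z) =
       K * (\<Sum>j\<in>{1..m0}. \<phi> (2^j*\<gamma>) / (2^j*\<gamma>) * a * (if 2^j*\<gamma>/2 < a then 1 else 0))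
     + K * (\<Sum>j\<in>{1..m0}. \<phi> (2^j*\<gamma>) / p (2^j*\<gamma>) * b * (if p (2^j*\<gamma>)/2 < b then 1 else 0))"
      unfolding R_def lam_def a_def b_def sum.distrib sum_distrib_left
      by (intro arg_cong2[where f="(+)"] sum.cong refl) (simp_all add: mult_ac)
    also have "\<dots> \<le> K * (C1 * \<phi> a) + K * (C2 * conj_fn \<phi> b)"
      using f_point[OF g a0, of m0] g_point[OF g b0, of m0] K0
      by (intro add_mono mult_left_mono) auto
    also have "\<dots> = K * (C1 * Ff z + C2 * Fg z)" unfolding a_def b_def Ff_eq Fg_eq by (simp add: algebra_simps)
    also have "\<dots> \<le> K * ((C1 + C2) * (Ff z + Fg z))"
    proof -
      have "C1 * Ff z \<le> (C1 + C2) * Ff z" using C2_pos Ff0[of z] by (intro mult_right_mono) auto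
      moreover have "C2 * Fg z \<le> (C1 + C2) * Fg z" using C1_pos Fg0[of z] by (intro mult_right_mono) auto
      ultimately have "C1 * Ff z + C2 * Fg z \<le> (C1 + C2) * Ff z + (C1 + C2) * Fg z" by (rule add_mono)
      also have "\<dots> = (C1 + C2) * (Ff z + Fg z)" by (simp add: distrib_left)
      finally show ?thesis using K0 by (intro mult_left_mono) auto
    qed
    finally show "(\<Sum>j\<in>{1..m0}. R j z) \<le> K * (C1 + C2) * (Ff z + Fg z)" by (simp add: mult.assoc)
  qed
  also have "\<dots> = ennreal (integral\<^sup>L lebesgue (\<lambda>z. K * (C1 + C2) * (Ff z + Fg z)))"
  proof (rule nn_integral_eq_integral)
    show "integrable lebesgue (\<lambda>z. K * (C1 + C2) * (Ff z + Fg z))"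
      by (rule integrable_mult_right) (rule Bochner_Integration.integrable_add[OF iF iG])
    show "AE x in lebesgue. 0 \<le> K * (C1 + C2) * (Ff x + Fg x)"
      using K0 C1_pos C2_pos Ff0 Fg0 by (auto intro!: mult_nonneg_nonneg add_nonneg_nonneg)
  qed
  also have "integral\<^sup>L lebesgue (\<lambda>z. K * (C1 + C2) * (Ff z + Fg z)) = K * (C1 + C2) * (IF + IG)"
  proof -
    have "integral\<^sup>L lebesgue (\<lambda>z. K * (C1 + C2) * (Ff z + Fg z)) = K * (C1 + C2) * integral\<^sup>L lebesgue (\<lambda>z. Ff z + Fg z)"
      by (rule integral_mult_right_zero)
    also have "integral\<^sup>L lebesgue (\<lambda>z. Ff z + Fg z) = IF + IG"
      unfolding IF_def IG_def by (rule Bochner_Integration.integral_add[OF iF iG])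
    finally show ?thesis .
  qed
  finally have sumV: "(\<Sum>j\<in>{1..m0}. V j) \<le> ennreal (cc TYPE('n) * \<phi> \<gamma> * \<mu>)"
    unfolding IFG cc_def K_def by (simp add: mult.assoc)
  define T where "T = cc TYPE('n) * \<phi> \<gamma> * \<mu>"
  have T0: "0 \<le> T" unfolding T_def cc_def using Kc_pos[where 'n='n] C1_pos C2_pos phig mu0 by simp
  have ne: "V ` {1..m0} \<noteq> {}" using m0 by auto
  obtain j0 where j0: "j0 \<in> {1..m0}" "V j0 = Min (V ` {1..m0})"
    using Min_in[OF finite_imageI[OF finite_atLeastAtMost] ne] by auto
  have jmin: "V j0 \<le> V i" if "i \<in> {1..m0}" for i
    using j0(2) that by simp
  have "of_nat m0 * V j0 = (\<Sum>j\<in>{1..m0}. V j0)" by simp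
  also have "\<dots> \<le> (\<Sum>j\<in>{1..m0}. V j)" using jmin by (intro sum_mono) auto
  finally have mV: "of_nat m0 * V j0 \<le> ennreal T" using sumV unfolding T_def by simp
  have Vfin: "V j0 \<noteq> \<infinity>"
  proof
    assume "V j0 = \<infinity>"
    then have "of_nat m0 * V j0 = \<infinity>" using m0 by (simp add: ennreal_mult_eq_top_iff)
    then show False using mV by (simp add: top_unique)
  qed
  then obtain v where v: "V j0 = ennreal v" "0 \<le> v" by (cases "V j0") auto
  have "ennreal (real m0 * v) \<le> ennreal T" using mV v m0 by (simp add: ennreal_mult ennreal_of_nat_eq_real_of_nat)
  then have mv: "real m0 * v \<le> T" using T0 by (simp add: ennreal_le_iff)
  define L where "L = lam j0"
  have phL: "0 < \<phi> L" unfolding L_def using phi_pos lam0 by simp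
  have "X j0 = ennreal (1 / \<phi> L) * V j0"
  proof -
    have "ennreal (1 / \<phi> L) * ennreal (\<phi> L) = 1" using phL by (simp add: ennreal_mult[symmetric])
    then show ?thesis unfolding V_def L_def mult.assoc[symmetric] by simp
  qed
  also have "\<dots> = ennreal (v / \<phi> L)" using v phL by (simp add: ennreal_mult[symmetric])
  also have "\<dots> \<le> ennreal (cc TYPE('n) * \<phi> \<gamma> / (real m0 * \<phi> L) * \<mu>)"
  proof (rule ennreal_leI)
    have vt: "v \<le> T / real m0" using mv m0 by (simp add: field_simps)
    have "v / \<phi> L \<le> T / real m0 / \<phi> L" by (rule divide_right_mono[OF vt]) (use phL in simp)
    also have "T / real m0 / \<phi> L = cc TYPE('n) * \<phi> \<gamma> / (real m0 * \<phi> L) * \<mu>" unfolding T_def by simp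
    finally show "v / \<phi> L \<le> cc TYPE('n) * \<phi> \<gamma> / (real m0 * \<phi> L) * \<mu>" .
  qed
  finally have XL: "X j0 \<le> ennreal (cc TYPE('n) * \<phi> \<gamma> / (real m0 * \<phi> L) * \<mu>)" .
  have L1: "\<gamma> \<le> L" unfolding L_def lam_def using j0(1) g by (simp add: one_le_power)
  have L2: "L \<le> 2 ^ m0 * \<gamma>" unfolding L_def lam_def using j0(1) g
    by (intro mult_right_mono power_increasing) auto
  show ?thesis
    using L1 L2 XL unfolding X_def L_def f_def g'_def \<mu>_def by blast
qed

end

theorem lemma4p1:
  fixes \<phi> :: "real \<Rightarrow> real"
  assumes "N_function \<phi>" and "structural \<phi>"
  shows "\<exists>c>0. \<forall>(\<Omega>::'n::euclidean_space set) t0 (w::real \<times> 'n \<Rightarrow> real) (Dw::real \<times> 'n \<Rightarrow> 'n)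
             (G::real \<times> 'n \<Rightarrow> 'n) (\<gamma>::real) (m0::nat).
     open \<Omega> \<and> bounded \<Omega> \<and> 0 < t0 \<and>
     orlicz \<phi> ({-t0..<0} \<times> \<Omega>) w \<and> orlicz \<phi> ({-t0..<0} \<times> \<Omega>) Dw \<and>
     (AE t in lborel. t \<in> {-t0<..<0} \<longrightarrow> W0 \<phi> \<Omega> (\<lambda>x. w (t, x)) (\<lambda>x. Dw (t, x))) \<and>
     orlicz (conj_fn \<phi>) ({-t0..<0} \<times> \<Omega>) G \<and>
     (\<forall>\<eta>. test_fn ({..<0} \<times> \<Omega>) \<eta> \<longrightarrow>
        (LINT z:({-t0..<0} \<times> \<Omega>)|lebesgue. w z * dt \<eta> z) =
        (LINT z:({-t0..<0} \<times> \<Omega>)|lebesgue. G z \<bullet> gradx \<eta> z)) \<and>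
     0 < \<gamma> \<and>
     \<phi> \<gamma> = (LINT z:({-t0..<0} \<times> \<Omega>)|lebesgue. \<phi> (norm (Dw z))) / measure lebesgue ({-t0..<0} \<times> \<Omega>)
           + (LINT z:({-t0..<0} \<times> \<Omega>)|lebesgue. conj_fn \<phi> (norm (G z))) / measure lebesgue ({-t0..<0} \<times> \<Omega>) \<and>
     1 \<le> m0
     \<longrightarrow> (\<exists>lam. \<gamma> \<le> lam \<and> lam \<le> 2 ^ m0 * \<gamma> \<and>
          emeasure lebesgue {z. ennreal lam < maxfn (lam / Nder \<phi> lam) (\<lambda>z. indicator ({-t0..<0} \<times> \<Omega>) z *\<^sub>R Dw z) z}
        + emeasure lebesgue {z. ennreal (Nder \<phi> lam) < maxfn (lam / Nder \<phi> lam) (\<lambda>z. indicator ({-t0..<0} \<times> \<Omega>) z *\<^sub>R G z) z}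
        \<le> ennreal (c * \<phi> \<gamma> / (real m0 * \<phi> lam) * measure lebesgue ({-t0..<0} \<times> \<Omega>)))"
proof -
  interpret Nf \<phi> using assms by unfold_locales
  obtain A B where AB: "1 < B" "0 < A" "\<forall>t>0. B * Nder \<phi> t \<le> Nder \<phi> (2*t) \<and> Nder \<phi> (2*t) \<le> A * Nder \<phi> t"
    using p_doubling by blast
  interpret Nf2 \<phi> A B using AB by unfold_locales auto
  have ccpos: "0 < cc TYPE('n)" unfolding cc_def using Kc_pos[where 'n='n] C1_pos C2_pos by simp
  show ?thesis
  proof (rule exI[of _ "cc TYPE('n)"], intro conjI allI impI)
    show "0 < cc TYPE('n)" by (rule ccpos)
    fix \<Omega> :: "'n set" and t0 and w :: "real \<times> 'n \<Rightarrow> real" and Dw G :: "real \<times> 'n \<Rightarrow> 'n" and \<gamma> :: real and m0 :: nat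
    assume H: "open \<Omega> \<and> bounded \<Omega> \<and> 0 < t0 \<and>
     orlicz \<phi> ({-t0..<0} \<times> \<Omega>) w \<and> orlicz \<phi> ({-t0..<0} \<times> \<Omega>) Dw \<and>
     (AE t in lborel. t \<in> {-t0<..<0} \<longrightarrow> W0 \<phi> \<Omega> (\<lambda>x. w (t, x)) (\<lambda>x. Dw (t, x))) \<and>
     orlicz (conj_fn \<phi>) ({-t0..<0} \<times> \<Omega>) G \<and>
     (\<forall>\<eta>. test_fn ({..<0} \<times> \<Omega>) \<eta> \<longrightarrow>
        (LINT z:({-t0..<0} \<times> \<Omega>)|lebesgue. w z * dt \<eta> z) =
        (LINT z:({-t0..<0} \<times> \<Omega>)|lebesgue. G z \<bullet> gradx \<eta> z)) \<and>
     0 < \<gamma> \<and>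
     \<phi> \<gamma> = (LINT z:({-t0..<0} \<times> \<Omega>)|lebesgue. \<phi> (norm (Dw z))) / measure lebesgue ({-t0..<0} \<times> \<Omega>)
           + (LINT z:({-t0..<0} \<times> \<Omega>)|lebesgue. conj_fn \<phi> (norm (G z))) / measure lebesgue ({-t0..<0} \<times> \<Omega>) \<and>
     1 \<le> m0"
    define Q where "Q = {-t0..<0} \<times> \<Omega>"
    have oD: "orlicz \<phi> Q Dw" and oG: "orlicz (conj_fn \<phi>) Q G" and g: "0 < \<gamma>" and m0: "1 \<le> m0"
      using H unfolding Q_def by auto
    have eq: "\<phi> \<gamma> = (LINT z:Q|lebesgue. \<phi> (norm (Dw z))) / measure lebesgue Q
           + (LINT z:Q|lebesgue. conj_fn \<phi> (norm (G z))) / measure lebesgue Q"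
      using H unfolding Q_def by auto
    have fm: "(\<lambda>z. indicator Q z *\<^sub>R Dw z) \<in> borel_measurable lebesgue"
      using oD unfolding orlicz_def set_borel_measurable_def by auto
    have gm: "(\<lambda>z. indicator Q z *\<^sub>R G z) \<in> borel_measurable lebesgue"
      using oG unfolding orlicz_def set_borel_measurable_def by auto
    obtain k1 where k1: "0 < k1" "(\<integral>\<^sup>+x\<in>Q. ennreal (\<phi> (norm (Dw x) / k1)) \<partial>lebesgue) < \<infinity>"
      using oD unfolding orlicz_def by auto
    obtain k2 where k2: "0 < k2" "(\<integral>\<^sup>+x\<in>Q. ennreal (conj_fn \<phi> (norm (G x) / k2)) \<partial>lebesgue) < \<infinity>"
      using oG unfolding orlicz_def by auto
    obtain C1' where C1': "0 < C1'" "\<forall>a\<ge>0. \<phi> a \<le> C1' * \<phi> (a / k1)" using phi_scale[OF k1(1)] by blast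
    obtain C2' where C2': "0 < C2'" "\<forall>a\<ge>0. conj_fn \<phi> a \<le> C2' * conj_fn \<phi> (a / k2)"
      using conj_scale[OF k2(1)] by blast
    have intf: "integrable lebesgue (\<lambda>z. indicator Q z * \<phi> (norm (Dw z)))"
      by (rule integr_gen[OF fm phi_borel phi0 phi_nonneg _ C1'(1) k1(1) k1(2)]) (use C1'(2) in auto)
    have intg: "integrable lebesgue (\<lambda>z. indicator Q z * conj_fn \<phi> (norm (G z)))"
      by (rule integr_gen[OF gm conj_borel conj_zero conj_nonneg _ C2'(1) k2(1) k2(2)]) (use C2'(2) in auto)
    show "\<exists>lam. \<gamma> \<le> lam \<and> lam \<le> 2 ^ m0 * \<gamma> \<and>
          emeasure lebesgue {z. ennreal lam < maxfn (lam / Nder \<phi> lam) (\<lambda>z. indicator ({-t0..<0} \<times> \<Omega>) z *\<^sub>R Dw z) z}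
        + emeasure lebesgue {z. ennreal (Nder \<phi> lam) < maxfn (lam / Nder \<phi> lam) (\<lambda>z. indicator ({-t0..<0} \<times> \<Omega>) z *\<^sub>R G z) z}
        \<le> ennreal (cc TYPE('n) * \<phi> \<gamma> / (real m0 * \<phi> lam) * measure lebesgue ({-t0..<0} \<times> \<Omega>))"
      using main[OF fm gm intf intg g m0 eq] unfolding Q_def .
  qed
qed


end
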